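(* Let $(\Omega(\mathcal{A}),d)$ be a differential calculus on a complex algebra $\mathcal{A}$, with $\mathcal{E}=\Omega^1(\mathcal{A})$ a finitely generated projective right $\mathcal{A}$-module, such that: (1) $\mathcal{E}=\mathcal{Z}(\mathcal{E})\otimes_{\mathcal{Z}(\mathcal{A})}\mathcal{A}$ (via the multiplication map); (2) $\mathcal{E}\otimes_{\mathcal{A}}\mathcal{E}=\ker(\wedge)\oplus\mathcal{F}$ where $\mathcal{F}$ is a right $\mathcal{A}$-submodule and $Q=\wedge|_{\mathcal{F}}:\mathcal{F}\to\Omega^2(\mathcal{A})$ is a right $\mathcal{A}$-linear isomorphism; (3) the map $\sigma=2P_{\rm sym}-1$ satisfies $\sigma(\omega\otimes_{\mathcal{A}}\eta)=\eta\otimes_{\mathcal{A}}\omega$ for all $\omega,\eta\in\mathcal{Z}(\mathcal{E})$. If $g$ is a pseudo-Riemannian bilinear metric on $\mathcal{E}$, then there exists a unique connection on $\mathcal{E}$ which is torsionless and compatible with $g$ on $\mathcal{Z}(\mathcal{E})$.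
   Context: A differential calculus: $\Omega(\mathcal{A})=\oplus_{j\ge0}\Omega^j(\mathcal{A})$, $\Omega^0=\mathcal{A}$, bimodules $\Omega^j$, an $\mathcal{A}$-bimodule product $\wedge$ with $\wedge(\Omega^j\otimes_{\mathcal{A}}\Omega^k)\subseteq\Omega^{j+k}$, $d:\Omega^j\to\Omega^{j+1}$ with $d^2=0$ and $d(\omega\wedge\eta)=d\omega\wedge\eta+(-1)^{\deg\omega}\omega\wedge d\eta$, and $\Omega^j$ the right span of $da_0\wedge\cdots\wedge da_{j-1}$. $\wedge:\mathcal{E}\otimes_{\mathcal{A}}\mathcal{E}\to\Omega^2(\mathcal{A})$ is the induced product. $P_{\rm sym}$ is the idempotent on $\mathcal{E}\otimes_{\mathcal{A}}\mathcal{E}$ with image $\ker\wedge$ and kernel $\mathcal{F}$. For a bimodule $\mathcal{M}$, $\mathcal{Z}(\mathcal{M})=\{m:am=ma\ \forall a\in\mathcal{A}\}$, and $\mathcal{Z}(\mathcal{A})$ is the center of $\mathcal{A}$. A connection is a $\mathbb{C}$-linear $\nabla:\mathcal{E}\to\mathcal{E}\otimes_{\mathcal{A}}\mathcal{E}$ with $\nabla(\omega a)=\nabla(\omega)a+\omega\otimes_{\mathcal{A}}da$; torsionless means $\wedge\circ\nabla+d=0$. A pseudo-Riemannian bilinear metric is an $\mathcal{A}$-bimodule map $g:\mathcal{E}\otimes_{\mathcal{A}}\mathcal{E}\to\mathcal{A}$ with $g\circ\sigma=g$ such that $e\mapsto g(e\otimes_{\mathcal{A}}-)$ is a right module isomorphism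 $\mathcal{E}\to\mathrm{Hom}_{\mathcal{A}}(\mathcal{E},\mathcal{A})$. $\nabla$ is compatible with $g$ on $\mathcal{Z}(\mathcal{E})$ if for all $\omega,\eta\in\mathcal{Z}(\mathcal{E})$: $(g\otimes_{\mathcal{A}}\mathrm{id})\{\sigma_{23}(\nabla(\omega)\otimes_{\mathcal{A}}\eta)+\omega\otimes_{\mathcal{A}}\nabla(\eta)\}=d(g(\omega\otimes_{\mathcal{A}}\eta))$, with $\sigma_{23}=\mathrm{id}\otimes_{\mathcal{A}}\sigma$ on $\mathcal{E}^{\otimes_{\mathcal{A}}3}$ and $(g\otimes_{\mathcal{A}}\mathrm{id})(x\otimes y\otimes z)=g(x\otimes_{\mathcal{A}}y)z$. *)

theory Defs
  imports Complex_Main "HOL-Library.Poly_Mapping"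
begin

definition zmult :: "int \<Rightarrow> 'g::ab_group_add \<Rightarrow> 'g" where
  "zmult k x = (if 0 \<le> k then (\<Sum>i<nat k. x) else - (\<Sum>i<nat (-k). x))"

definition addhom :: "('m::ab_group_add \<Rightarrow> 'p::ab_group_add) \<Rightarrow> bool" where
  "addhom f \<longleftrightarrow> (\<forall>x y. f (x + y) = f x + f y)"

section \<open>Balanced tensor products, defined as quotients of free abelian groups\<close>

text \<open>Free abelian group on pairs m, n: finitely supported integer functions on pairs.
 The canonical extension of a map on pairs to the free abelian group.\<close>

definition lift2 :: "('m \<Rightarrow> 'n \<Rightarrow> 'p::ab_group_add) \<Rightarrow> (('m \<times> 'n) \<Rightarrow>\<^sub>0 int) \<Rightarrow> 'p" where
  "lift2 t x = (\<Sum>p\<in>Poly_Mapping.keys x. zmult (Poly_Mapping.lookup x p) (t (fst p) (snd p)))"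

text \<open>The subgroup of relations defining the balanced tensor product
  M \<otimes>_S N, where M is a right S-module and N a left S-module
  (M, N, S given as subsets of ambient types).\<close>

inductive_set tensor_rel ::
  "'m::ab_group_add set \<Rightarrow> 'n::ab_group_add set \<Rightarrow> 's set \<Rightarrow> ('m \<Rightarrow> 's \<Rightarrow> 'm) \<Rightarrow> ('s \<Rightarrow> 'n \<Rightarrow> 'n)
     \<Rightarrow> (('m \<times> 'n) \<Rightarrow>\<^sub>0 int) set"
  for M N S rmul lmul where
  rel_addl: "m \<in> M \<Longrightarrow> m' \<in> M \<Longrightarrow> n \<in> N \<Longrightarrow>
     Poly_Mapping.single (m + m', n) 1 - Poly_Mapping.single (m, n) 1 - Poly_Mapping.single (m', n) 1
       \<in> tensor_rel M N S rmul lmul"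
| rel_addr: "m \<in> M \<Longrightarrow> n \<in> N \<Longrightarrow> n' \<in> N \<Longrightarrow>
     Poly_Mapping.single (m, n + n') 1 - Poly_Mapping.single (m, n) 1 - Poly_Mapping.single (m, n') 1
       \<in> tensor_rel M N S rmul lmul"
| rel_bal: "m \<in> M \<Longrightarrow> n \<in> N \<Longrightarrow> a \<in> S \<Longrightarrow>
     Poly_Mapping.single (rmul m a, n) 1 - Poly_Mapping.single (m, lmul a n) 1 \<in> tensor_rel M N S rmul lmul"
| rel_zero: "0 \<in> tensor_rel M N S rmul lmul"
| rel_diff: "x \<in> tensor_rel M N S rmul lmul \<Longrightarrow> y \<in> tensor_rel M N S rmul lmul \<Longrightarrow>
     x - y \<in> tensor_rel M N S rmul lmul"

text \<open>The map t exhibits the abelian group 'p as M \<otimes>_S N, i.e. the canonical map from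
  the free abelian group on M \<times> N to 'p is surjective with kernel exactly the relation subgroup
  (so 'p is isomorphic to F(M \<times> N)/R, with m \<otimes> n = t m n).\<close>

definition is_tensor ::
  "'m::ab_group_add set \<Rightarrow> 'n::ab_group_add set \<Rightarrow> 's set \<Rightarrow> ('m \<Rightarrow> 's \<Rightarrow> 'm) \<Rightarrow> ('s \<Rightarrow> 'n \<Rightarrow> 'n)
     \<Rightarrow> ('m \<Rightarrow> 'n \<Rightarrow> 'p::ab_group_add) \<Rightarrow> bool" where
  "is_tensor M N S rmul lmul t \<longleftrightarrow>
     (\<forall>\<tau>. \<exists>x. Poly_Mapping.keys x \<subseteq> M \<times> N \<and> lift2 t x = \<tau>) \<and>
     (\<forall>x. Poly_Mapping.keys x \<subseteq> M \<times> N \<longrightarrow> (lift2 t x = 0 \<longleftrightarrow> x \<in> tensor_rel M N S rmul lmul))"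

text \<open>The addhom map out of a tensor product induced by a balanced biaddhom map f
  (determined by m \<otimes> n \<mapsto> f m n; well-defined whenever f is balanced biaddhom).\<close>

definition tmap :: "('m \<Rightarrow> 'n \<Rightarrow> 't::ab_group_add) \<Rightarrow> ('m \<Rightarrow> 'n \<Rightarrow> 'p::ab_group_add) \<Rightarrow> 't \<Rightarrow> 'p" where
  "tmap t f \<tau> = lift2 f (SOME x. lift2 t x = \<tau>)"

definition left_module :: "('a::ring_1 \<Rightarrow> 'm::ab_group_add \<Rightarrow> 'm) \<Rightarrow> bool" where
  "left_module l \<longleftrightarrow> (\<forall>a b x y. l (a + b) x = l a x + l b x \<and> l a (x + y) = l a x + l a y \<and>
      l (a * b) x = l a (l b x) \<and> l 1 x = x)"

definition right_module :: "('m::ab_group_add \<Rightarrow> 'a::ring_1 \<Rightarrow> 'm) \<Rightarrow> bool" where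
  "right_module r \<longleftrightarrow> (\<forall>a b x y. r x (a + b) = r x a + r x b \<and> r (x + y) a = r x a + r y a \<and>
      r x (a * b) = r (r x a) b \<and> r x 1 = x)"

text \<open>A bimodule over the complex algebra A (the complex structure of A is given by a
  central ring homomorphism iota from the complex numbers); the complex numbers act
  the same way from both sides.\<close>

definition bimodule :: "(complex \<Rightarrow> 'a::ring_1) \<Rightarrow> ('a \<Rightarrow> 'm::ab_group_add \<Rightarrow> 'm) \<Rightarrow> ('m \<Rightarrow> 'a \<Rightarrow> 'm) \<Rightarrow> bool" where
  "bimodule \<iota> l r \<longleftrightarrow> left_module l \<and> right_module r \<and>
     (\<forall>a b x. l a (r x b) = r (l a x) b) \<and> (\<forall>c x. l (\<iota> c) x = r x (\<iota> c))"

definition complex_algebra :: "(complex \<Rightarrow> 'a::ring_1) \<Rightarrow> bool" where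
  "complex_algebra \<iota> \<longleftrightarrow> (\<forall>c d. \<iota> (c + d) = \<iota> c + \<iota> d \<and> \<iota> (c * d) = \<iota> c * \<iota> d) \<and> \<iota> 1 = 1 \<and>
     (\<forall>c a. \<iota> c * a = a * \<iota> c)"

definition bcenter :: "('a \<Rightarrow> 'm \<Rightarrow> 'm) \<Rightarrow> ('m \<Rightarrow> 'a \<Rightarrow> 'm) \<Rightarrow> 'm set" where
  "bcenter l r = {m. \<forall>a. l a m = r m a}"

definition acenter :: "'a::ring_1 set" where
  "acenter = {z. \<forall>a. z * a = a * z}"

text \<open>Finitely generated projective right module: a direct summand of a free module A^n.\<close>

definition fg_projective_right :: "('m::ab_group_add \<Rightarrow> 'a::ring_1 \<Rightarrow> 'm) \<Rightarrow> bool" where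
  "fg_projective_right r \<longleftrightarrow> (\<exists>(n::nat) (i :: 'm \<Rightarrow> nat \<Rightarrow> 'a) (p :: (nat \<Rightarrow> 'a) \<Rightarrow> 'm).
      (\<forall>x k. n \<le> k \<longrightarrow> i x k = 0) \<and>
      (\<forall>x y. i (x + y) = (\<lambda>k. i x k + i y k)) \<and> (\<forall>x a. i (r x a) = (\<lambda>k. i x k * a)) \<and>
      (\<forall>v w. p (\<lambda>k. v k + w k) = p v + p w) \<and> (\<forall>v a. p (\<lambda>k. v k * a) = r (p v) a) \<and>
      (\<forall>x. p (i x) = x))"

definition right_dual :: "('m::ab_group_add \<Rightarrow> 'a::ring_1 \<Rightarrow> 'm) \<Rightarrow> ('m \<Rightarrow> 'a) set" where
  "right_dual r = {\<phi>. addhom \<phi> \<and> (\<forall>x a. \<phi> (r x a) = \<phi> x * a)}"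

definition wedgeT :: "('e \<Rightarrow> 'e \<Rightarrow> 't::ab_group_add) \<Rightarrow> ('e \<Rightarrow> 'e \<Rightarrow> 'f::ab_group_add) \<Rightarrow> 't \<Rightarrow> 'f" where
  "wedgeT tEE wedge = tmap tEE wedge"

text \<open>P_sym: the idempotent with image ker(wedge) and kernel F.\<close>
definition Psym :: "('e \<Rightarrow> 'e \<Rightarrow> 't::ab_group_add) \<Rightarrow> ('e \<Rightarrow> 'e \<Rightarrow> 'f::ab_group_add) \<Rightarrow> 't set \<Rightarrow> 't \<Rightarrow> 't" where
  "Psym tEE wedge Fs \<tau> = (THE k. wedgeT tEE wedge k = 0 \<and> \<tau> - k \<in> Fs)"

definition sigma :: "('e \<Rightarrow> 'e \<Rightarrow> 't::ab_group_add) \<Rightarrow> ('e \<Rightarrow> 'e \<Rightarrow> 'f::ab_group_add) \<Rightarrow> 't set \<Rightarrow> 't \<Rightarrow> 't" where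
  "sigma tEE wedge Fs \<tau> = (Psym tEE wedge Fs \<tau> + Psym tEE wedge Fs \<tau>) - \<tau>"

definition is_connection ::
  "(complex \<Rightarrow> 'a::ring_1) \<Rightarrow> ('e::ab_group_add \<Rightarrow> 'a \<Rightarrow> 'e) \<Rightarrow> ('t::ab_group_add \<Rightarrow> 'a \<Rightarrow> 't)
     \<Rightarrow> ('a \<Rightarrow> 'e) \<Rightarrow> ('e \<Rightarrow> 'e \<Rightarrow> 't) \<Rightarrow> ('e \<Rightarrow> 't) \<Rightarrow> bool" where
  "is_connection \<iota> rE rT d0 tEE nabla \<longleftrightarrow> addhom nabla \<and>
     (\<forall>\<omega> c. nabla (rE \<omega> (\<iota> c)) = rT (nabla \<omega>) (\<iota> c)) \<and>
     (\<forall>\<omega> a. nabla (rE \<omega> a) = rT (nabla \<omega>) a + tEE \<omega> (d0 a))"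

definition torsionless :: "('e \<Rightarrow> 'e \<Rightarrow> 't::ab_group_add) \<Rightarrow> ('e \<Rightarrow> 'e \<Rightarrow> 'f::ab_group_add)
     \<Rightarrow> ('e \<Rightarrow> 'f) \<Rightarrow> ('e \<Rightarrow> 't) \<Rightarrow> bool" where
  "torsionless tEE wedge d1 nabla \<longleftrightarrow> (\<forall>\<omega>. wedgeT tEE wedge (nabla \<omega>) + d1 \<omega> = 0)"

text \<open>E \<otimes>_A E \<otimes>_A E is modelled as E \<otimes>_A (E \<otimes>_A E) with x \<otimes> \<tau> = tES x \<tau>.
  For \<tau> in E \<otimes> E and z in E, tens_r tEE tES \<tau> z is \<tau> \<otimes> z (via associativity);
  sigma23 = id \<otimes> sigma; gid = g \<otimes> id.\<close>
definition tens_r :: "('e \<Rightarrow> 'e \<Rightarrow> 't::ab_group_add) \<Rightarrow> ('e \<Rightarrow> 't \<Rightarrow> 's::ab_group_add) \<Rightarrow> 't \<Rightarrow> 'e \<Rightarrow> 's" where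
  "tens_r tEE tES \<tau> z = tmap tEE (\<lambda>x y. tES x (tEE y z)) \<tau>"

definition sigma23 :: "('t \<Rightarrow> 't) \<Rightarrow> ('e \<Rightarrow> 't::ab_group_add \<Rightarrow> 's::ab_group_add) \<Rightarrow> 's \<Rightarrow> 's" where
  "sigma23 \<sigma> tES = tmap tES (\<lambda>x \<tau>. tES x (\<sigma> \<tau>))"

definition gid :: "('a \<Rightarrow> 'e \<Rightarrow> 'e) \<Rightarrow> ('e \<Rightarrow> 'e \<Rightarrow> 't::ab_group_add) \<Rightarrow> ('e \<Rightarrow> 't \<Rightarrow> 's::ab_group_add)
     \<Rightarrow> ('t \<Rightarrow> 'a) \<Rightarrow> 's \<Rightarrow> 'e::ab_group_add" where
  "gid lE tEE tES g = tmap tES (\<lambda>x \<tau>. tmap tEE (\<lambda>y z. lE (g (tEE x y)) z) \<tau>)"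

definition compatible_Z ::
  "('a::ring_1 \<Rightarrow> 'e::ab_group_add \<Rightarrow> 'e) \<Rightarrow> ('e \<Rightarrow> 'a \<Rightarrow> 'e) \<Rightarrow> ('a \<Rightarrow> 'e) \<Rightarrow> ('e \<Rightarrow> 'e \<Rightarrow> 't::ab_group_add)
     \<Rightarrow> ('e \<Rightarrow> 't \<Rightarrow> 's::ab_group_add) \<Rightarrow> ('t \<Rightarrow> 't) \<Rightarrow> ('t \<Rightarrow> 'a) \<Rightarrow> ('e \<Rightarrow> 't) \<Rightarrow> bool" where
  "compatible_Z lE rE d0 tEE tES \<sigma> g nabla \<longleftrightarrow>
     (\<forall>\<omega>\<in>bcenter lE rE. \<forall>\<eta>\<in>bcenter lE rE.
        gid lE tEE tES g (sigma23 \<sigma> tES (tens_r tEE tES (nabla \<omega>) \<eta>))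
        + gid lE tEE tES g (tES \<omega> (nabla \<eta>)) = d0 (g (tEE \<omega> \<eta>)))"

end

theory Submission
  imports Defs
begin


section \<open>Integer multiples\<close>

lemma nsum_add: "(\<Sum>i<(m::nat)+n. (x::'g::ab_group_add)) = (\<Sum>i<m. x) + (\<Sum>i<n. x)"
  by (induction n) (auto simp: add_ac)

lemma zmult_alt: "zmult k x = (\<Sum>i<nat k. x) - (\<Sum>i<nat (-k). x)"
  by (simp add: zmult_def)

lemma zmult_add: "zmult (k + l) (x::'g::ab_group_add) = zmult k x + zmult l x"
proof -
  define S where "S = (\<lambda>n::nat. (\<Sum>i<n. x))"
  have "nat (k+l) + nat (-k) + nat (-l) = nat (-(k+l)) + nat k + nat l" by arith
  then have "S (nat (k+l) + nat (-k) + nat (-l)) = S (nat (-(k+l)) + nat k + nat l)" by simp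
  then have "S (nat (k+l)) + S (nat (-k)) + S (nat (-l)) = S (nat (-(k+l))) + S (nat k) + S (nat l)"
    unfolding S_def nsum_add by simp
  then have "S (nat (k+l)) - S (nat (-(k+l))) = (S (nat k) - S (nat (-k))) + (S (nat l) - S (nat (-l)))"
    by (simp add: algebra_simps)
  then show ?thesis unfolding zmult_alt S_def by simp
qed

lemma zmult_zero [simp]: "zmult 0 x = 0" by (simp add: zmult_def)
lemma zmult_zero2 [simp]: "zmult k (0::'g::ab_group_add) = 0" by (simp add: zmult_def)

lemma zmult_neg: "zmult (-k) (x::'g::ab_group_add) = - zmult k x"
  using zmult_add[of k "-k" x] by (simp add: eq_neg_iff_add_eq_0 add.commute)

lemma zmult_one [simp]: "zmult 1 x = x" by (simp add: zmult_def)

lemma hom_sum_nat: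
  assumes "\<forall>a b. (f::'x::ab_group_add \<Rightarrow> 'y::ab_group_add) (a + b) = f a + f b"
  shows "f (\<Sum>i<(n::nat). x) = (\<Sum>i<n. f x)"
proof -
  have f0: "f 0 = 0" using assms by (metis add_cancel_right_right add_0)
  show ?thesis by (induction n) (simp_all add: f0 assms)
qed

lemma hom_zero: assumes "\<forall>a b. (f::'x::ab_group_add \<Rightarrow> 'y::ab_group_add) (a + b) = f a + f b" shows "f 0 = 0"
  using assms by (metis add_cancel_right_right add_0)

lemma hom_neg: assumes "\<forall>a b. (f::'x::ab_group_add \<Rightarrow> 'y::ab_group_add) (a + b) = f a + f b" shows "f (- a) = - f a"
  using assms hom_zero[OF assms] by (metis add.right_inverse add_eq_0_iff)

lemma hom_diff: assumes "\<forall>a b. (f::'x::ab_group_add \<Rightarrow> 'y::ab_group_add) (a + b) = f a + f b" shows "f (a - b) = f a - f b"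
  using hom_neg[OF assms] assms by (metis diff_conv_add_uminus)

lemma hom_sum: assumes "\<forall>a b. (f::'x::ab_group_add \<Rightarrow> 'y::ab_group_add) (a + b) = f a + f b" shows "f (sum g I) = (\<Sum>i\<in>I. f (g i))"
  using assms hom_zero[OF assms] by (induction I rule: infinite_finite_induct) auto

lemma zmult_hom:
  assumes "\<forall>a b. (f::'x::ab_group_add \<Rightarrow> 'y::ab_group_add) (a + b) = f a + f b"
  shows "f (zmult k x) = zmult k (f x)"
  unfolding zmult_alt using hom_diff[OF assms] hom_sum_nat[OF assms] by simp

lemma lift2_alt:
  assumes "finite K" "Poly_Mapping.keys x \<subseteq> K"
  shows "lift2 t x = (\<Sum>p\<in>K. zmult (Poly_Mapping.lookup x p) (t (fst p) (snd p)))"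
  unfolding lift2_def
  by (rule sum.mono_neutral_left) (use assms in \<open>auto simp: in_keys_iff\<close>)

lemma lift2_add: "lift2 t (x + y) = lift2 t x + lift2 t y"
proof -
  let ?K = "Poly_Mapping.keys x \<union> Poly_Mapping.keys y"
  have "lift2 t (x + y) = (\<Sum>p\<in>?K. zmult (Poly_Mapping.lookup (x+y) p) (t (fst p) (snd p)))"
    by (rule lift2_alt) (use keys_add[of x y] in auto)
  also have "\<dots> = (\<Sum>p\<in>?K. zmult (Poly_Mapping.lookup x p) (t (fst p) (snd p)))
      + (\<Sum>p\<in>?K. zmult (Poly_Mapping.lookup y p) (t (fst p) (snd p)))"
    by (simp add: lookup_add zmult_add sum.distrib)
  also have "\<dots> = lift2 t x + lift2 t y"
    by (simp add: lift2_alt[symmetric])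
  finally show ?thesis .
qed

lemma lift2_hom: "\<forall>a b. lift2 t (a + b) = lift2 t a + lift2 t b"
  by (simp add: lift2_add)

lemma lift2_zero [simp]: "lift2 t 0 = 0" by (simp add: lift2_def)
lemma lift2_neg: "lift2 t (- x) = - lift2 t x" by (rule hom_neg[OF lift2_hom])
lemma lift2_diff: "lift2 t (x - y) = lift2 t x - lift2 t y" by (rule hom_diff[OF lift2_hom])
lemma lift2_sum: "lift2 t (sum g I) = (\<Sum>i\<in>I. lift2 t (g i))" by (rule hom_sum[OF lift2_hom])

lemma lift2_single: "lift2 t (Poly_Mapping.single p k) = zmult k (t (fst p) (snd p))"
proof (cases "k = 0")
  case True then show ?thesis by (simp add: lift2_def)
next
  case False then show ?thesis by (simp add: lift2_def)
qed

definition bal :: "'m::ab_group_add set \<Rightarrow> 'n::ab_group_add set \<Rightarrow> 's set \<Rightarrow> ('m \<Rightarrow> 's \<Rightarrow> 'm) \<Rightarrow> ('s \<Rightarrow> 'n \<Rightarrow> 'n)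
     \<Rightarrow> ('m \<Rightarrow> 'n \<Rightarrow> 'p::ab_group_add) \<Rightarrow> bool" where
  "bal M N S rmul lmul f \<longleftrightarrow>
    (\<forall>m\<in>M. \<forall>m'\<in>M. \<forall>n\<in>N. f (m + m') n = f m n + f m' n) \<and>
    (\<forall>m\<in>M. \<forall>n\<in>N. \<forall>n'\<in>N. f m (n + n') = f m n + f m n') \<and>
    (\<forall>m\<in>M. \<forall>n\<in>N. \<forall>a\<in>S. f (rmul m a) n = f m (lmul a n))"

lemma lift2_rel:
  assumes "bal M N S rmul lmul f" "x \<in> tensor_rel M N S rmul lmul"
  shows "lift2 f x = 0"
  using assms(2)
proof induction
  case (rel_addl m m' n)
  then have "f (m + m') n = f m n + f m' n" using assms(1) unfolding bal_def by blast
  then show ?case by (simp only: lift2_diff lift2_single zmult_one fst_conv snd_conv) simp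
next
  case (rel_addr m n n')
  then have "f m (n + n') = f m n + f m n'" using assms(1) unfolding bal_def by blast
  then show ?case by (simp only: lift2_diff lift2_single zmult_one fst_conv snd_conv) simp
next
  case (rel_bal m n a)
  then have "f (rmul m a) n = f m (lmul a n)" using assms(1) unfolding bal_def by blast
  then show ?case by (simp only: lift2_diff lift2_single zmult_one fst_conv snd_conv) simp
next
  case rel_zero then show ?case by simp
next
  case (rel_diff x y) then show ?case by (simp add: lift2_diff)
qed

lemma keys_gen3: "Poly_Mapping.keys (Poly_Mapping.single a (1::int) - Poly_Mapping.single b 1 - Poly_Mapping.single c 1) \<subseteq> {a,b,c}"
proof -
  have 1: "Poly_Mapping.keys (Poly_Mapping.single a (1::int) - Poly_Mapping.single b 1 - Poly_Mapping.single c 1)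
    \<subseteq> Poly_Mapping.keys (Poly_Mapping.single a (1::int) - Poly_Mapping.single b 1) \<union> Poly_Mapping.keys (Poly_Mapping.single c (1::int))"
    by (rule keys_diff)
  have 2: "Poly_Mapping.keys (Poly_Mapping.single a (1::int) - Poly_Mapping.single b 1)
    \<subseteq> Poly_Mapping.keys (Poly_Mapping.single a (1::int)) \<union> Poly_Mapping.keys (Poly_Mapping.single b (1::int))"
    by (rule keys_diff)
  have ka: "Poly_Mapping.keys (Poly_Mapping.single a (1::int)) = {a}" "Poly_Mapping.keys (Poly_Mapping.single b (1::int)) = {b}"
    "Poly_Mapping.keys (Poly_Mapping.single c (1::int)) = {c}" by simp_all
  show ?thesis using 1 2 ka by blast
qed

lemma keys_gen2: "Poly_Mapping.keys (Poly_Mapping.single a (1::int) - Poly_Mapping.single b 1) \<subseteq> {a,b}"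
proof -
  have 2: "Poly_Mapping.keys (Poly_Mapping.single a (1::int) - Poly_Mapping.single b 1)
    \<subseteq> Poly_Mapping.keys (Poly_Mapping.single a (1::int)) \<union> Poly_Mapping.keys (Poly_Mapping.single b (1::int))"
    by (rule keys_diff)
  have ka: "Poly_Mapping.keys (Poly_Mapping.single a (1::int)) = {a}" "Poly_Mapping.keys (Poly_Mapping.single b (1::int)) = {b}"
    by simp_all
  show ?thesis using 2 ka by blast
qed

lemma eq3: "A - B - C = 0 \<Longrightarrow> A = B + (C::'g::ab_group_add)"
proof -
  assume e: "A - B - C = 0"
  have "A = (A - B - C) + (B + C)" by (simp add: algebra_simps)
  with e show ?thesis by simp
qed

lemma eq2: "A - B = 0 \<Longrightarrow> A = (B::'g::ab_group_add)" by simp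

lemma is_tensor_ker:
  assumes "is_tensor M N S rmul lmul t" "Poly_Mapping.keys x \<subseteq> M \<times> N"
  shows "lift2 t x = 0 \<longleftrightarrow> x \<in> tensor_rel M N S rmul lmul"
proof -
  have "\<forall>x. Poly_Mapping.keys x \<subseteq> M \<times> N \<longrightarrow> (lift2 t x = 0 \<longleftrightarrow> x \<in> tensor_rel M N S rmul lmul)"
    using assms(1) unfolding is_tensor_def by (rule conjunct2)
  then show ?thesis using assms(2) by simp
qed

lemma tensor_surj:
  assumes "is_tensor M N S rmul lmul t"
  shows "\<exists>x. Poly_Mapping.keys x \<subseteq> M \<times> N \<and> lift2 t x = \<tau>"
proof -
  have "\<forall>\<tau>. \<exists>x. Poly_Mapping.keys x \<subseteq> M \<times> N \<and> lift2 t x = \<tau>"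
    using assms(1) unfolding is_tensor_def by (rule conjunct1)
  then show ?thesis by simp
qed

lemma tensor_bal:
  assumes "is_tensor M N S rmul lmul t"
    and "\<forall>m\<in>M. \<forall>a\<in>S. rmul m a \<in> M" "\<forall>n\<in>N. \<forall>a\<in>S. lmul a n \<in> N"
    and "\<forall>m\<in>M. \<forall>m'\<in>M. m + m' \<in> M" "\<forall>n\<in>N. \<forall>n'\<in>N. n + n' \<in> N"
  shows "bal M N S rmul lmul t"
proof -
  have H: "lift2 t x = 0" if "x \<in> tensor_rel M N S rmul lmul" "Poly_Mapping.keys x \<subseteq> M \<times> N" for x
    using is_tensor_ker[OF assms(1) that(2)] that(1) by simp
  show ?thesis unfolding bal_def
  proof (intro conjI ballI)
    fix m m' n assume h: "m \<in> M" "m' \<in> M" "n \<in> N"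
    have "lift2 t (Poly_Mapping.single (m + m', n) 1 - Poly_Mapping.single (m, n) 1 - Poly_Mapping.single (m', n) 1) = 0" (is "lift2 t ?x = 0")
    proof (rule H)
      show "?x \<in> tensor_rel M N S rmul lmul" by (rule tensor_rel.rel_addl[OF h])
      have "m + m' \<in> M" using h assms(4) by blast
      then show "Poly_Mapping.keys ?x \<subseteq> M \<times> N" using keys_gen3[of "(m+m',n)" "(m,n)" "(m',n)"] h by blast
    qed
    then have "t (m + m') n - t m n - t m' n = 0" by (simp only: lift2_diff lift2_single zmult_one fst_conv snd_conv)
    then show "t (m + m') n = t m n + t m' n" by (rule eq3)
  next
    fix m n n' assume h: "m \<in> M" "n \<in> N" "n' \<in> N"
    have "lift2 t (Poly_Mapping.single (m, n + n') 1 - Poly_Mapping.single (m, n) 1 - Poly_Mapping.single (m, n') 1) = 0" (is "lift2 t ?x = 0")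
    proof (rule H)
      show "?x \<in> tensor_rel M N S rmul lmul" by (rule tensor_rel.rel_addr[OF h])
      have "n + n' \<in> N" using h assms(5) by blast
      then show "Poly_Mapping.keys ?x \<subseteq> M \<times> N" using keys_gen3[of "(m,n+n')" "(m,n)" "(m,n')"] h by blast
    qed
    then have "t m (n + n') - t m n - t m n' = 0" by (simp only: lift2_diff lift2_single zmult_one fst_conv snd_conv)
    then show "t m (n + n') = t m n + t m n'" by (rule eq3)
  next
    fix m n a assume h: "m \<in> M" "n \<in> N" "a \<in> S"
    have "lift2 t (Poly_Mapping.single (rmul m a, n) 1 - Poly_Mapping.single (m, lmul a n) 1) = 0" (is "lift2 t ?x = 0")
    proof (rule H)
      show "?x \<in> tensor_rel M N S rmul lmul" by (rule tensor_rel.rel_bal[OF h])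
      have "rmul m a \<in> M" "lmul a n \<in> N" using h assms(2,3) by blast+
      then show "Poly_Mapping.keys ?x \<subseteq> M \<times> N" using keys_gen2[of "(rmul m a,n)" "(m,lmul a n)"] h by blast
    qed
    then have "t (rmul m a) n - t m (lmul a n) = 0" by (simp only: lift2_diff lift2_single zmult_one fst_conv snd_conv)
    then show "t (rmul m a) n = t m (lmul a n)" by (rule eq2)
  qed
qed

lemma tensor_bal_UNIV:
  assumes "is_tensor UNIV UNIV S rmul lmul t"
  shows "bal UNIV UNIV S rmul lmul t"
  by (rule tensor_bal[OF assms]) simp_all

lemma tensor_lift_eq:
  assumes "is_tensor M N S rmul lmul t" "bal M N S rmul lmul f"
    "Poly_Mapping.keys x \<subseteq> M \<times> N" "Poly_Mapping.keys y \<subseteq> M \<times> N" "lift2 t x = lift2 t y"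
  shows "lift2 f x = lift2 f y"
proof -
  have "Poly_Mapping.keys (x - y) \<subseteq> M \<times> N" using assms(3,4) keys_diff[of x y] by blast
  moreover have "lift2 t (x - y) = 0" using assms(5) by (simp add: lift2_diff)
  ultimately have "x - y \<in> tensor_rel M N S rmul lmul" using is_tensor_ker[OF assms(1)] by simp
  then have "lift2 f (x - y) = 0" by (rule lift2_rel[OF assms(2)])
  then show ?thesis by (simp add: lift2_diff)
qed

lemma tmap_lift:
  assumes "is_tensor UNIV UNIV S rmul lmul t" "bal UNIV UNIV S rmul lmul f"
  shows "tmap t f (lift2 t x) = lift2 f x"
proof -
  have ex: "\<exists>y. lift2 t y = lift2 t x" by blast
  let ?y = "SOME y. lift2 t y = lift2 t x"
  have e: "lift2 t ?y = lift2 t x" by (rule someI_ex[OF ex])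
  have "lift2 f ?y = lift2 f x" by (rule tensor_lift_eq[OF assms _ _ e]) auto
  then show ?thesis by (simp add: tmap_def)
qed

lemma tmap_t:
  assumes "is_tensor UNIV UNIV S rmul lmul t" "bal UNIV UNIV S rmul lmul f"
  shows "tmap t f (t m n) = f m n"
  using tmap_lift[OF assms, of "Poly_Mapping.single (m,n) 1"] by (simp add: lift2_single)



lemma tmap_add:
  assumes "is_tensor UNIV UNIV S rmul lmul t" "bal UNIV UNIV S rmul lmul f"
  shows "tmap t f (a + b) = tmap t f a + tmap t f b"
proof -
  obtain x where x: "lift2 t x = a" using tensor_surj[OF assms(1)] by blast
  obtain y where y: "lift2 t y = b" using tensor_surj[OF assms(1)] by blast
  have "a + b = lift2 t (x + y)" using x y by (simp add: lift2_add)
  then have "tmap t f (a + b) = lift2 f (x + y)" by (simp add: tmap_lift[OF assms])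
  also have "\<dots> = lift2 f x + lift2 f y" by (rule lift2_add)
  also have "\<dots> = tmap t f a + tmap t f b"
  proof -
    have "tmap t f a = lift2 f x" using tmap_lift[OF assms, of x] x by simp
    moreover have "tmap t f b = lift2 f y" using tmap_lift[OF assms, of y] y by simp
    ultimately show ?thesis by simp
  qed
  finally show ?thesis .
qed

lemma tmap_hom:
  assumes "is_tensor UNIV UNIV S rmul lmul t" "bal UNIV UNIV S rmul lmul f"
  shows "\<forall>a b. tmap t f (a + b) = tmap t f a + tmap t f b"
  using tmap_add[OF assms] by blast

lemma closed_nsum:
  assumes "P 0" "\<And>a b. P a \<Longrightarrow> P b \<Longrightarrow> P (a + b)" "P x"
  shows "P (\<Sum>i<(n::nat). x)"
  by (induction n) (simp_all add: assms)

lemma closed_sum: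
  assumes "P 0" "\<And>a b. P a \<Longrightarrow> P b \<Longrightarrow> P (a + b)" "\<And>i. i \<in> I \<Longrightarrow> P (g i)"
  shows "P (sum g I)"
  using assms(3) by (induction I rule: infinite_finite_induct) (simp_all add: assms(1,2))

lemma tensor_induct:
  assumes "is_tensor M N S rmul lmul t"
    and "P 0" "\<And>a b. P a \<Longrightarrow> P b \<Longrightarrow> P (a + b)" "\<And>a. P a \<Longrightarrow> P (- a)"
    and "\<And>m n. m \<in> M \<Longrightarrow> n \<in> N \<Longrightarrow> P (t m n)"
  shows "P \<tau>"
proof -
  obtain x where x: "Poly_Mapping.keys x \<subseteq> M \<times> N" "lift2 t x = \<tau>" using tensor_surj[OF assms(1)] by blast
  have "P (zmult k (t m n))" if "m \<in> M" "n \<in> N" for k m n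
  proof -
    have p: "P (t m n)" using assms(5) that .
    have "P (\<Sum>i<nat k. t m n)" by (rule closed_nsum[of P, OF assms(2) assms(3) p])
    moreover have "P (- (\<Sum>i<nat (-k). t m n))"
      by (rule assms(4), rule closed_nsum[of P, OF assms(2) assms(3) p])
    ultimately show ?thesis unfolding zmult_alt diff_conv_add_uminus by (rule assms(3))
  qed
  then have "P (lift2 t x)" unfolding lift2_def
    by (intro closed_sum[of P]) (use assms(2,3) x(1) in auto)
  then show ?thesis using x by simp
qed

lemma hom_eq_tensor:
  assumes "is_tensor M N S rmul lmul t"
    and "\<forall>a b. (f::'p::ab_group_add \<Rightarrow> 'q::ab_group_add) (a + b) = f a + f b" "\<forall>a b. (g::'p \<Rightarrow> 'q) (a + b) = g a + g b"
    and "\<And>m n. m \<in> M \<Longrightarrow> n \<in> N \<Longrightarrow> f (t m n) = g (t m n)"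
  shows "f \<tau> = g \<tau>"
proof (rule tensor_induct[OF assms(1), where P="\<lambda>x. f x = g x"])
  show "f 0 = g 0" using hom_zero[OF assms(2)] hom_zero[OF assms(3)] by simp
next
  fix a b assume "f a = g a" "f b = g b"
  then show "f (a + b) = g (a + b)" using assms(2,3) by simp
next
  fix a assume "f a = g a"
  then show "f (- a) = g (- a)" using hom_neg[OF assms(2)] hom_neg[OF assms(3)] by simp
next
  fix m n assume "m \<in> M" "n \<in> N"
  then show "f (t m n) = g (t m n)" by (rule assms(4))
qed




context
  fixes \<iota> :: "complex \<Rightarrow> 'a::ring_1" and l :: "'a \<Rightarrow> 'm::ab_group_add \<Rightarrow> 'm" and r :: "'m \<Rightarrow> 'a \<Rightarrow> 'm"
  assumes bm: "bimodule \<iota> l r"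
begin

lemma bm_laddl: "l (a + b) x = l a x + l b x" using bm by (simp add: bimodule_def left_module_def)
lemma bm_laddr: "l a (x + y) = l a x + l a y" using bm by (simp add: bimodule_def left_module_def)
lemma bm_lmult: "l (a * b) x = l a (l b x)" using bm by (simp add: bimodule_def left_module_def)
lemma bm_lone: "l 1 x = x" using bm by (simp add: bimodule_def left_module_def)
lemma bm_raddl: "r (x + y) a = r x a + r y a" using bm by (simp add: bimodule_def right_module_def)
lemma bm_raddr: "r x (a + b) = r x a + r x b" using bm by (simp add: bimodule_def right_module_def)
lemma bm_rmult: "r x (a * b) = r (r x a) b" using bm by (simp add: bimodule_def right_module_def)
lemma bm_rone: "r x 1 = x" using bm by (simp add: bimodule_def right_module_def)
lemma bm_lr: "l a (r x b) = r (l a x) b" using bm by (simp add: bimodule_def)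
lemma bm_iota: "l (\<iota> c) x = r x (\<iota> c)" using bm by (simp add: bimodule_def)

lemma bm_hom_lx: "\<forall>u v. l a (u + v) = l a u + l a v" by (simp add: bm_laddr)
lemma bm_hom_la: "\<forall>u v. l (u + v) x = l u x + l v x" by (simp add: bm_laddl)
lemma bm_hom_rx: "\<forall>u v. r (u + v) a = r u a + r v a" by (simp add: bm_raddl)
lemma bm_hom_ra: "\<forall>u v. r x (u + v) = r x u + r x v" by (simp add: bm_raddr)

lemma bm_l0x: "l a 0 = 0" by (rule hom_zero[OF bm_hom_lx])
lemma bm_l0a: "l 0 x = 0" by (rule hom_zero[OF bm_hom_la])
lemma bm_r0x: "r 0 a = 0" by (rule hom_zero[OF bm_hom_rx])
lemma bm_r0a: "r x 0 = 0" by (rule hom_zero[OF bm_hom_ra])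
lemma bm_lnegx: "l a (- x) = - l a x" by (rule hom_neg[OF bm_hom_lx])
lemma bm_lnega: "l (- a) x = - l a x" by (rule hom_neg[OF bm_hom_la])
lemma bm_rnegx: "r (- x) a = - r x a" by (rule hom_neg[OF bm_hom_rx])
lemma bm_rnega: "r x (- a) = - r x a" by (rule hom_neg[OF bm_hom_ra])
lemma bm_ldiffx: "l a (x - y) = l a x - l a y" by (rule hom_diff[OF bm_hom_lx])
lemma bm_ldiffa: "l (a - b) x = l a x - l b x" by (rule hom_diff[OF bm_hom_la])
lemma bm_rdiffx: "r (x - y) a = r x a - r y a" by (rule hom_diff[OF bm_hom_rx])
lemma bm_rdiffa: "r x (a - b) = r x a - r x b" by (rule hom_diff[OF bm_hom_ra])
lemma bm_lsumx: "l a (sum f I) = (\<Sum>i\<in>I. l a (f i))" by (rule hom_sum[OF bm_hom_lx])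
lemma bm_lsuma: "l (sum f I) x = (\<Sum>i\<in>I. l (f i) x)" by (rule hom_sum[OF bm_hom_la])
lemma bm_rsumx: "r (sum f I) a = (\<Sum>i\<in>I. r (f i) a)" by (rule hom_sum[OF bm_hom_rx])
lemma bm_rsuma: "r x (sum f I) = (\<Sum>i\<in>I. r x (f i))" by (rule hom_sum[OF bm_hom_ra])

end

lemma addhomD: "addhom f \<Longrightarrow> \<forall>a b. f (a + b) = f a + f b" by (simp add: addhom_def)

lemma balD:
  assumes "bal UNIV UNIV S rmul lmul f"
  shows "f (m + m') n = f m n + f m' n" "f m (n + n') = f m n + f m n'" "a \<in> S \<Longrightarrow> f (rmul m a) n = f m (lmul a n)"
  using assms by (auto simp: bal_def)

lemma balI:
  assumes "\<And>m m' n. f (m + m') n = f m n + f m' n" "\<And>m n n'. f m (n + n') = f m n + f m n'"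
    "\<And>m n a. a \<in> S \<Longrightarrow> f (rmul m a) n = f m (lmul a n)"
  shows "bal UNIV UNIV S rmul lmul f"
  using assms by (auto simp: bal_def)




locale LC =
  fixes \<iota> :: "complex \<Rightarrow> 'a::ring_1"
    and lE :: "'a \<Rightarrow> 'e::ab_group_add \<Rightarrow> 'e" and rE :: "'e \<Rightarrow> 'a \<Rightarrow> 'e"
    and lF :: "'a \<Rightarrow> 'f::ab_group_add \<Rightarrow> 'f" and rF :: "'f \<Rightarrow> 'a \<Rightarrow> 'f"
    and d0 :: "'a \<Rightarrow> 'e" and d1 :: "'e \<Rightarrow> 'f" and wedge :: "'e \<Rightarrow> 'e \<Rightarrow> 'f"
    and tEE :: "'e \<Rightarrow> 'e \<Rightarrow> 't::ab_group_add" and lT :: "'a \<Rightarrow> 't \<Rightarrow> 't" and rT :: "'t \<Rightarrow> 'a \<Rightarrow> 't"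
    and tES :: "'e \<Rightarrow> 't \<Rightarrow> 's::ab_group_add"
    and Fs :: "'t set"
    and g :: "'t \<Rightarrow> 'a"
  assumes alg: "complex_algebra \<iota>"
    and bimod_E: "bimodule \<iota> lE rE"
    and bimod_F: "bimodule \<iota> lF rF"
    and fgp: "fg_projective_right rE"
    and d0_add: "addhom d0"
    and d0_C: "\<forall>c a. d0 (\<iota> c * a) = lE (\<iota> c) (d0 a)"
    and d0_leib: "\<forall>a b. d0 (a * b) = rE (d0 a) b + lE a (d0 b)"
    and d1_add: "addhom d1"
    and d1_C: "\<forall>c \<omega>. d1 (lE (\<iota> c) \<omega>) = lF (\<iota> c) (d1 \<omega>)"
    and d1_leib_l: "\<forall>a \<omega>. d1 (lE a \<omega>) = wedge (d0 a) \<omega> + lF a (d1 \<omega>)"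
    and d1_leib_r: "\<forall>\<omega> a. d1 (rE \<omega> a) = rF (d1 \<omega>) a - wedge \<omega> (d0 a)"
    and dd: "\<forall>a. d1 (d0 a) = 0"
    and wedge_addl: "\<forall>x x' y. wedge (x + x') y = wedge x y + wedge x' y"
    and wedge_addr: "\<forall>x y y'. wedge x (y + y') = wedge x y + wedge x y'"
    and wedge_l: "\<forall>a x y. wedge (lE a x) y = lF a (wedge x y)"
    and wedge_m: "\<forall>x a y. wedge (rE x a) y = wedge x (lE a y)"
    and wedge_r: "\<forall>x y a. wedge x (rE y a) = rF (wedge x y) a"
    and gen1: "\<forall>\<omega>. \<exists>xs :: ('a \<times> 'a) list. \<omega> = sum_list (map (\<lambda>(a, b). rE (d0 a) b) xs)"
    and gen2: "\<forall>\<theta>. \<exists>xs :: ('a \<times> 'a \<times> 'a) list.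
                  \<theta> = sum_list (map (\<lambda>(a, b, c). rF (wedge (d0 a) (d0 b)) c) xs)"
    and tens_EE: "is_tensor UNIV UNIV UNIV rE lE tEE"
    and bimod_T: "bimodule \<iota> lT rT"
    and lT_def: "\<forall>a x y. lT a (tEE x y) = tEE (lE a x) y"
    and rT_def: "\<forall>x y a. rT (tEE x y) a = tEE x (rE y a)"
    and tens_ES: "is_tensor UNIV UNIV UNIV rE lT tES"
    and cond1: "is_tensor (bcenter lE rE) UNIV acenter rE (*) rE"
    and F_zero: "0 \<in> Fs"
    and F_add: "\<forall>x\<in>Fs. \<forall>y\<in>Fs. x + y \<in> Fs"
    and F_uminus: "\<forall>x\<in>Fs. - x \<in> Fs"
    and F_right: "\<forall>x\<in>Fs. \<forall>a. rT x a \<in> Fs"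
    and F_span: "\<forall>\<tau>. \<exists>k f. wedgeT tEE wedge k = 0 \<and> f \<in> Fs \<and> \<tau> = k + f"
    and F_inter: "\<forall>\<tau>\<in>Fs. wedgeT tEE wedge \<tau> = 0 \<longrightarrow> \<tau> = 0"
    and Q_iso: "bij_betw (wedgeT tEE wedge) Fs UNIV"
    and cond3: "\<forall>\<omega>\<in>bcenter lE rE. \<forall>\<eta>\<in>bcenter lE rE. sigma tEE wedge Fs (tEE \<omega> \<eta>) = tEE \<eta> \<omega>"
    and g_add: "addhom g"
    and g_l: "\<forall>a \<tau>. g (lT a \<tau>) = a * g \<tau>"
    and g_r: "\<forall>\<tau> a. g (rT \<tau> a) = g \<tau> * a"
    and g_sym: "\<forall>\<tau>. g (sigma tEE wedge Fs \<tau>) = g \<tau>"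
    and g_nondeg: "bij_betw (\<lambda>e x. g (tEE e x)) UNIV (right_dual rE)"


context LC begin

lemmas E_laddl = bm_laddl[OF bimod_E]
lemmas E_laddr = bm_laddr[OF bimod_E]
lemmas E_lmult = bm_lmult[OF bimod_E]
lemmas E_lone = bm_lone[OF bimod_E]
lemmas E_raddl = bm_raddl[OF bimod_E]
lemmas E_raddr = bm_raddr[OF bimod_E]
lemmas E_rmult = bm_rmult[OF bimod_E]
lemmas E_rone = bm_rone[OF bimod_E]
lemmas E_lr = bm_lr[OF bimod_E]
lemmas E_iota = bm_iota[OF bimod_E]
lemmas E_hom_lx = bm_hom_lx[OF bimod_E]
lemmas E_hom_la = bm_hom_la[OF bimod_E]
lemmas E_hom_rx = bm_hom_rx[OF bimod_E]
lemmas E_hom_ra = bm_hom_ra[OF bimod_E]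
lemmas E_l0x = bm_l0x[OF bimod_E]
lemmas E_l0a = bm_l0a[OF bimod_E]
lemmas E_r0x = bm_r0x[OF bimod_E]
lemmas E_r0a = bm_r0a[OF bimod_E]
lemmas E_lnegx = bm_lnegx[OF bimod_E]
lemmas E_lnega = bm_lnega[OF bimod_E]
lemmas E_rnegx = bm_rnegx[OF bimod_E]
lemmas E_rnega = bm_rnega[OF bimod_E]
lemmas E_ldiffx = bm_ldiffx[OF bimod_E]
lemmas E_ldiffa = bm_ldiffa[OF bimod_E]
lemmas E_rdiffx = bm_rdiffx[OF bimod_E]
lemmas E_rdiffa = bm_rdiffa[OF bimod_E]
lemmas E_lsumx = bm_lsumx[OF bimod_E]
lemmas E_lsuma = bm_lsuma[OF bimod_E]
lemmas E_rsumx = bm_rsumx[OF bimod_E]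
lemmas E_rsuma = bm_rsuma[OF bimod_E]
lemmas F_laddl = bm_laddl[OF bimod_F]
lemmas F_laddr = bm_laddr[OF bimod_F]
lemmas F_lmult = bm_lmult[OF bimod_F]
lemmas F_lone = bm_lone[OF bimod_F]
lemmas F_raddl = bm_raddl[OF bimod_F]
lemmas F_raddr = bm_raddr[OF bimod_F]
lemmas F_rmult = bm_rmult[OF bimod_F]
lemmas F_rone = bm_rone[OF bimod_F]
lemmas F_lr = bm_lr[OF bimod_F]
lemmas F_iota = bm_iota[OF bimod_F]
lemmas F_hom_lx = bm_hom_lx[OF bimod_F]
lemmas F_hom_la = bm_hom_la[OF bimod_F]
lemmas F_hom_rx = bm_hom_rx[OF bimod_F]
lemmas F_hom_ra = bm_hom_ra[OF bimod_F]
lemmas F_l0x = bm_l0x[OF bimod_F]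
lemmas F_l0a = bm_l0a[OF bimod_F]
lemmas F_r0x = bm_r0x[OF bimod_F]
lemmas F_r0a = bm_r0a[OF bimod_F]
lemmas F_lnegx = bm_lnegx[OF bimod_F]
lemmas F_lnega = bm_lnega[OF bimod_F]
lemmas F_rnegx = bm_rnegx[OF bimod_F]
lemmas F_rnega = bm_rnega[OF bimod_F]
lemmas F_ldiffx = bm_ldiffx[OF bimod_F]
lemmas F_ldiffa = bm_ldiffa[OF bimod_F]
lemmas F_rdiffx = bm_rdiffx[OF bimod_F]
lemmas F_rdiffa = bm_rdiffa[OF bimod_F]
lemmas F_lsumx = bm_lsumx[OF bimod_F]
lemmas F_lsuma = bm_lsuma[OF bimod_F]
lemmas F_rsumx = bm_rsumx[OF bimod_F]
lemmas F_rsuma = bm_rsuma[OF bimod_F]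
lemmas T_laddl = bm_laddl[OF bimod_T]
lemmas T_laddr = bm_laddr[OF bimod_T]
lemmas T_lmult = bm_lmult[OF bimod_T]
lemmas T_lone = bm_lone[OF bimod_T]
lemmas T_raddl = bm_raddl[OF bimod_T]
lemmas T_raddr = bm_raddr[OF bimod_T]
lemmas T_rmult = bm_rmult[OF bimod_T]
lemmas T_rone = bm_rone[OF bimod_T]
lemmas T_lr = bm_lr[OF bimod_T]
lemmas T_iota = bm_iota[OF bimod_T]
lemmas T_hom_lx = bm_hom_lx[OF bimod_T]
lemmas T_hom_la = bm_hom_la[OF bimod_T]
lemmas T_hom_rx = bm_hom_rx[OF bimod_T]
lemmas T_hom_ra = bm_hom_ra[OF bimod_T]
lemmas T_l0x = bm_l0x[OF bimod_T]
lemmas T_l0a = bm_l0a[OF bimod_T]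
lemmas T_r0x = bm_r0x[OF bimod_T]
lemmas T_r0a = bm_r0a[OF bimod_T]
lemmas T_lnegx = bm_lnegx[OF bimod_T]
lemmas T_lnega = bm_lnega[OF bimod_T]
lemmas T_rnegx = bm_rnegx[OF bimod_T]
lemmas T_rnega = bm_rnega[OF bimod_T]
lemmas T_ldiffx = bm_ldiffx[OF bimod_T]
lemmas T_ldiffa = bm_ldiffa[OF bimod_T]
lemmas T_rdiffx = bm_rdiffx[OF bimod_T]
lemmas T_rdiffa = bm_rdiffa[OF bimod_T]
lemmas T_lsumx = bm_lsumx[OF bimod_T]
lemmas T_lsuma = bm_lsuma[OF bimod_T]
lemmas T_rsumx = bm_rsumx[OF bimod_T]
lemmas T_rsuma = bm_rsuma[OF bimod_T]

abbreviation "Z \<equiv> bcenter lE rE"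
abbreviation "W \<equiv> wedgeT tEE wedge"
abbreviation "\<sigma> \<equiv> sigma tEE wedge Fs"
abbreviation "Ps \<equiv> Psym tEE wedge Fs"

lemma Z_iff: "\<omega> \<in> Z \<longleftrightarrow> (\<forall>a. lE a \<omega> = rE \<omega> a)" by (simp add: bcenter_def)

lemma iota_central: "\<iota> c * a = a * \<iota> c" using alg by (simp add: complex_algebra_def)
lemma iota_add: "\<iota> (c + d) = \<iota> c + \<iota> d" using alg by (simp add: complex_algebra_def)
lemma iota_one: "\<iota> 1 = 1" using alg by (simp add: complex_algebra_def)

definition hh :: 'a where "hh = \<iota> (1/2)"
lemma hh_central: "hh * a = a * hh" by (simp add: hh_def iota_central)
lemma hh_twice: "hh + hh = 1"
  unfolding hh_def iota_add[symmetric] iota_one[symmetric] by simp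

lemma T_half: assumes "x + x = (0::'t)" shows "x = 0"
proof -
  have "x = rT x (hh + hh)" by (simp add: hh_twice T_rone)
  also have "\<dots> = rT (x + x) hh" by (simp add: T_raddr T_raddl)
  also have "\<dots> = 0" by (simp add: assms T_r0x)
  finally show ?thesis .
qed

lemma bal_EE: "bal UNIV UNIV UNIV rE lE tEE" by (rule tensor_bal_UNIV[OF tens_EE])
lemma bal_ES: "bal UNIV UNIV UNIV rE lT tES" by (rule tensor_bal_UNIV[OF tens_ES])

lemma tEE_addl: "tEE (x + y) z = tEE x z + tEE y z" by (rule balD(1)[OF bal_EE])
lemma tEE_addr: "tEE x (y + z) = tEE x y + tEE x z" by (rule balD(2)[OF bal_EE])
lemma tEE_bal: "tEE (rE x a) y = tEE x (lE a y)" by (rule balD(3)[OF bal_EE]) simp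
lemma tES_addl: "tES (x + y) z = tES x z + tES y z" by (rule balD(1)[OF bal_ES])
lemma tES_addr: "tES x (y + z) = tES x y + tES x z" by (rule balD(2)[OF bal_ES])
lemma tES_bal: "tES (rE x a) y = tES x (lT a y)" by (rule balD(3)[OF bal_ES]) simp

lemma tEE_homl: "\<forall>u v. tEE (u + v) y = tEE u y + tEE v y" by (simp add: tEE_addl)
lemma tEE_homr: "\<forall>u v. tEE x (u + v) = tEE x u + tEE x v" by (simp add: tEE_addr)
lemma tEE_0l: "tEE 0 y = 0" by (rule hom_zero[OF tEE_homl])
lemma tEE_0r: "tEE x 0 = 0" by (rule hom_zero[OF tEE_homr])
lemma tEE_negl: "tEE (- x) y = - tEE x y" by (rule hom_neg[OF tEE_homl])
lemma tEE_negr: "tEE x (- y) = - tEE x y" by (rule hom_neg[OF tEE_homr])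
lemma tEE_diffl: "tEE (x - x') y = tEE x y - tEE x' y" by (rule hom_diff[OF tEE_homl])
lemma tEE_diffr: "tEE x (y - y') = tEE x y - tEE x y'" by (rule hom_diff[OF tEE_homr])
lemma tEE_suml: "tEE (sum f I) y = (\<Sum>i\<in>I. tEE (f i) y)" by (rule hom_sum[OF tEE_homl])
lemma tEE_sumr: "tEE x (sum f I) = (\<Sum>i\<in>I. tEE x (f i))" by (rule hom_sum[OF tEE_homr])

lemma tES_homl: "\<forall>u v. tES (u + v) y = tES u y + tES v y" by (simp add: tES_addl)
lemma tES_homr: "\<forall>u v. tES x (u + v) = tES x u + tES x v" by (simp add: tES_addr)

lemma g_hom: "\<forall>u v. g (u + v) = g u + g v" using g_add by (simp add: addhom_def)
lemma g_0: "g 0 = 0" by (rule hom_zero[OF g_hom])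
lemma g_neg: "g (- x) = - g x" by (rule hom_neg[OF g_hom])
lemma g_diff: "g (x - y) = g x - g y" by (rule hom_diff[OF g_hom])
lemma g_sum: "g (sum f I) = (\<Sum>i\<in>I. g (f i))" by (rule hom_sum[OF g_hom])
lemma g_addx: "g (x + y) = g x + g y" using g_hom by blast
lemma g_lT: "g (lT a \<tau>) = a * g \<tau>" using g_l by blast
lemma g_rT: "g (rT \<tau> a) = g \<tau> * a" using g_r by blast

lemma lT_t: "lT a (tEE x y) = tEE (lE a x) y" using lT_def by blast
lemma rT_t: "rT (tEE x y) a = tEE x (rE y a)" using rT_def by blast

lemma g_tr: "g (tEE x (rE y a)) = g (tEE x y) * a" by (simp add: rT_t[symmetric] g_rT)
lemma g_tl: "g (tEE (lE a x) y) = a * g (tEE x y)" by (simp add: lT_t[symmetric] g_lT)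

lemma bal_W: "bal UNIV UNIV UNIV rE lE wedge"
  by (rule balI) (use wedge_addl wedge_addr wedge_m in auto)

lemma W_t: "W (tEE x y) = wedge x y" unfolding wedgeT_def by (rule tmap_t[OF tens_EE bal_W])
lemma W_hom: "\<forall>a b. W (a + b) = W a + W b" unfolding wedgeT_def by (rule tmap_hom[OF tens_EE bal_W])
lemma W_add: "W (a + b) = W a + W b" using W_hom by blast
lemma W_0: "W 0 = 0" by (rule hom_zero[OF W_hom])
lemma W_neg: "W (- a) = - W a" by (rule hom_neg[OF W_hom])
lemma W_diff: "W (a - b) = W a - W b" by (rule hom_diff[OF W_hom])
lemma W_sum: "W (sum f I) = (\<Sum>i\<in>I. W (f i))" by (rule hom_sum[OF W_hom])

lemma W_r: "W (rT \<tau> a) = rF (W \<tau>) a"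
  by (rule hom_eq_tensor[OF tens_EE, where f="\<lambda>\<tau>. W (rT \<tau> a)" and g="\<lambda>\<tau>. rF (W \<tau>) a"])
     (simp_all add: T_raddl W_add F_raddl rT_t W_t wedge_r)

lemma F_diff: "x \<in> Fs \<Longrightarrow> y \<in> Fs \<Longrightarrow> x - y \<in> Fs"
  using F_add F_uminus by (metis diff_conv_add_uminus)

lemma Psym_char:
  assumes "W k = 0" "\<tau> - k \<in> Fs"
  shows "Ps \<tau> = k"
  unfolding Psym_def
proof (rule the_equality)
  show "W k = 0 \<and> \<tau> - k \<in> Fs" using assms by simp
next
  fix k' assume h: "W k' = 0 \<and> \<tau> - k' \<in> Fs"
  have e: "k' - k = (\<tau> - k) - (\<tau> - k')" by (simp add: algebra_simps)
  have "(\<tau> - k) - (\<tau> - k') \<in> Fs" by (rule F_diff) (use assms h in auto)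
  then have "k' - k \<in> Fs" by (subst e)
  moreover have "W (k' - k) = 0" using h assms by (simp add: W_diff)
  ultimately have "k' - k = 0" using F_inter by blast
  then show "k' = k" by simp
qed

lemma Psym_prop: "W (Ps \<tau>) = 0" "\<tau> - Ps \<tau> \<in> Fs"
proof -
  obtain k f where kf: "W k = 0" "f \<in> Fs" "\<tau> = k + f" using F_span by blast
  have "Ps \<tau> = k" by (rule Psym_char) (use kf in auto)
  then show "W (Ps \<tau>) = 0" "\<tau> - Ps \<tau> \<in> Fs" using kf by auto
qed

lemma Ps_add: "Ps (a + b) = Ps a + Ps b"
proof (rule Psym_char)
  show "W (Ps a + Ps b) = 0" by (simp add: W_add Psym_prop)
  have e: "a + b - (Ps a + Ps b) = (a - Ps a) + (b - Ps b)" by (simp add: algebra_simps)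
  have "(a - Ps a) + (b - Ps b) \<in> Fs" using F_add Psym_prop(2) by blast
  then show "a + b - (Ps a + Ps b) \<in> Fs" by (subst e)
qed

lemma Ps_r: "Ps (rT \<tau> a) = rT (Ps \<tau>) a"
proof (rule Psym_char)
  show "W (rT (Ps \<tau>) a) = 0" by (simp add: W_r Psym_prop F_r0x)
  have "rT \<tau> a - rT (Ps \<tau>) a = rT (\<tau> - Ps \<tau>) a" by (simp add: T_rdiffx)
  then show "rT \<tau> a - rT (Ps \<tau>) a \<in> Fs" using F_right Psym_prop by simp
qed

lemma Ps_fix: "W \<tau> = 0 \<Longrightarrow> Ps \<tau> = \<tau>"
  by (rule Psym_char) (simp_all add: F_zero)

lemma sig_eq: "\<sigma> \<tau> = (Ps \<tau> + Ps \<tau>) - \<tau>" by (simp add: sigma_def)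

lemma sig_add: "\<sigma> (a + b) = \<sigma> a + \<sigma> b" by (simp add: sig_eq Ps_add algebra_simps)
lemma sig_hom: "\<forall>a b. \<sigma> (a + b) = \<sigma> a + \<sigma> b" by (simp add: sig_add)
lemma sig_0: "\<sigma> 0 = 0" by (rule hom_zero[OF sig_hom])
lemma sig_neg: "\<sigma> (- a) = - \<sigma> a" by (rule hom_neg[OF sig_hom])
lemma sig_diff: "\<sigma> (a - b) = \<sigma> a - \<sigma> b" by (rule hom_diff[OF sig_hom])
lemma sig_sum: "\<sigma> (sum f I) = (\<Sum>i\<in>I. \<sigma> (f i))" by (rule hom_sum[OF sig_hom])
lemma sig_r: "\<sigma> (rT \<tau> a) = rT (\<sigma> \<tau>) a" by (simp add: sig_eq Ps_r T_raddl T_rdiffx)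
lemma sig_fix: "W \<tau> = 0 \<Longrightarrow> \<sigma> \<tau> = \<tau>" by (simp add: sig_eq Ps_fix)
lemma sig_fixW: assumes "\<sigma> \<tau> = \<tau>" shows "W \<tau> = 0"
proof -
  have "(Ps \<tau> - \<tau>) + (Ps \<tau> - \<tau>) = (Ps \<tau> + Ps \<tau> - \<tau>) - \<tau>" by (simp add: algebra_simps)
  also have "\<dots> = 0" using assms by (simp add: sig_eq)
  finally have "Ps \<tau> - \<tau> = 0" by (rule T_half)
  then have "Ps \<tau> = \<tau>" by simp
  then show ?thesis using Psym_prop(1) by metis
qed
lemma sig_flip: "\<omega> \<in> Z \<Longrightarrow> \<eta> \<in> Z \<Longrightarrow> \<sigma> (tEE \<omega> \<eta>) = tEE \<eta> \<omega>" using cond3 by blast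

end



context LC begin

definition Pin :: "'e \<Rightarrow> 't \<Rightarrow> 'e" where "Pin x \<tau> = tmap tEE (\<lambda>y z. lE (g (tEE x y)) z) \<tau>"

lemma bal_Pin: "bal UNIV UNIV UNIV rE lE (\<lambda>y z. lE (g (tEE x y)) z)"
  by (rule balI) (simp_all add: tEE_addr g_addx E_laddl E_laddr g_tr E_lmult)

lemma Pin_t: "Pin x (tEE y z) = lE (g (tEE x y)) z"
  unfolding Pin_def by (rule tmap_t[OF tens_EE bal_Pin])
lemma Pin_hom: "\<forall>a b. Pin x (a + b) = Pin x a + Pin x b"
  unfolding Pin_def by (rule tmap_hom[OF tens_EE bal_Pin])
lemma Pin_add: "Pin x (a + b) = Pin x a + Pin x b" using Pin_hom by blast
lemma Pin_0: "Pin x 0 = 0" by (rule hom_zero[OF Pin_hom])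
lemma Pin_diff: "Pin x (a - b) = Pin x a - Pin x b" by (rule hom_diff[OF Pin_hom])
lemma Pin_sum: "Pin x (sum f I) = (\<Sum>i\<in>I. Pin x (f i))" by (rule hom_sum[OF Pin_hom])

lemma Pin_addx: "Pin (x + x') \<tau> = Pin x \<tau> + Pin x' \<tau>"
  by (rule hom_eq_tensor[OF tens_EE, where f="\<lambda>\<tau>. Pin (x + x') \<tau>" and g="\<lambda>\<tau>. Pin x \<tau> + Pin x' \<tau>"])
     (simp_all add: Pin_add Pin_t tEE_addl g_addx E_laddl)

lemma Pin_bal: "Pin (rE x a) \<tau> = Pin x (lT a \<tau>)"
  by (rule hom_eq_tensor[OF tens_EE, where f="\<lambda>\<tau>. Pin (rE x a) \<tau>" and g="\<lambda>\<tau>. Pin x (lT a \<tau>)"])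
     (simp_all add: Pin_add Pin_t T_laddr lT_t tEE_bal)

lemma Pin_r: "Pin x (rT \<tau> a) = rE (Pin x \<tau>) a"
  by (rule hom_eq_tensor[OF tens_EE, where f="\<lambda>\<tau>. Pin x (rT \<tau> a)" and g="\<lambda>\<tau>. rE (Pin x \<tau>) a"])
     (simp_all add: Pin_add Pin_t T_raddl E_raddl rT_t E_lr)

lemma bal_Pout: "bal UNIV UNIV UNIV rE lT Pin"
  by (rule balI) (simp_all add: Pin_addx Pin_add Pin_bal)

lemma Pin_abs: "Pin = (\<lambda>x \<tau>. tmap tEE (\<lambda>y z. lE (g (tEE x y)) z) \<tau>)"
  by (intro ext) (simp add: Pin_def)

lemma gid_alt: "gid lE tEE tES g = tmap tES Pin"
  by (simp add: gid_def Pin_abs)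

lemma gid_t: "gid lE tEE tES g (tES x \<tau>) = Pin x \<tau>"
  unfolding gid_alt by (rule tmap_t[OF tens_ES bal_Pout])
lemma gid_hom: "\<forall>a b. gid lE tEE tES g (a + b) = gid lE tEE tES g a + gid lE tEE tES g b"
  unfolding gid_alt by (rule tmap_hom[OF tens_ES bal_Pout])
lemma gid_add: "gid lE tEE tES g (a + b) = gid lE tEE tES g a + gid lE tEE tES g b"
  using gid_hom by blast

lemma bal_tr: "bal UNIV UNIV UNIV rE lE (\<lambda>x y. tES x (tEE y z))"
  by (rule balI) (simp_all add: tES_addl tEE_addl tES_addr tES_bal lT_t)

lemma tr_t: "tens_r tEE tES (tEE x y) z = tES x (tEE y z)"
  unfolding tens_r_def by (rule tmap_t[OF tens_EE bal_tr])
lemma tr_hom: "\<forall>a b. tens_r tEE tES (a + b) z = tens_r tEE tES a z + tens_r tEE tES b z"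
  unfolding tens_r_def by (rule tmap_hom[OF tens_EE bal_tr])
lemma tr_add: "tens_r tEE tES (a + b) z = tens_r tEE tES a z + tens_r tEE tES b z"
  using tr_hom by blast

definition KK :: "'t \<Rightarrow> 'e \<Rightarrow> 'e" where "KK \<tau> \<eta> = tmap tEE (\<lambda>x y. rE x (g (tEE y \<eta>))) \<tau>"

lemma bal_K: "bal UNIV UNIV UNIV rE lE (\<lambda>x y. rE x (g (tEE y \<eta>)))"
  by (rule balI) (simp_all add: E_raddl tEE_addl g_addx E_raddr g_tl E_rmult)

lemma K_t: "KK (tEE x y) \<eta> = rE x (g (tEE y \<eta>))"
  unfolding KK_def by (rule tmap_t[OF tens_EE bal_K])
lemma K_hom: "\<forall>a b. KK (a + b) \<eta> = KK a \<eta> + KK b \<eta>"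
  unfolding KK_def by (rule tmap_hom[OF tens_EE bal_K])
lemma K_add: "KK (a + b) \<eta> = KK a \<eta> + KK b \<eta>" using K_hom by blast
lemma K_0: "KK 0 \<eta> = 0" using hom_zero[OF K_hom] .
lemma K_diff: "KK (a - b) \<eta> = KK a \<eta> - KK b \<eta>" by (rule hom_diff[OF K_hom])
lemma K_sum: "KK (sum f I) \<eta> = (\<Sum>i\<in>I. KK (f i) \<eta>)" by (rule hom_sum[OF K_hom])

lemma K_r: "KK \<tau> (rE \<eta> a) = rE (KK \<tau> \<eta>) a"
  by (rule hom_eq_tensor[OF tens_EE, where f="\<lambda>\<tau>. KK \<tau> (rE \<eta> a)" and g="\<lambda>\<tau>. rE (KK \<tau> \<eta>) a"])
     (simp_all add: K_add K_t E_raddl g_tr E_rmult)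

lemma K_addr: "KK \<tau> (\<eta> + \<eta>') = KK \<tau> \<eta> + KK \<tau> \<eta>'"
  by (rule hom_eq_tensor[OF tens_EE, where f="\<lambda>\<tau>. KK \<tau> (\<eta> + \<eta>')" and g="\<lambda>\<tau>. KK \<tau> \<eta> + KK \<tau> \<eta>'"])
     (simp_all add: K_add K_t tEE_addr g_addx E_raddr algebra_simps)

lemma K_homr: "\<forall>a b. KK \<tau> (a + b) = KK \<tau> a + KK \<tau> b" by (simp add: K_addr)
lemma K_sumr: "KK \<tau> (sum f I) = (\<Sum>i\<in>I. KK \<tau> (f i))" by (rule hom_sum[OF K_homr])

subsection \<open>frame\<close>

lemma frame_exists:
  "\<exists>(J::(nat \<times> ('e \<times> 'a)) set) \<xi> \<psi>. finite J \<and> (\<forall>j\<in>J. \<xi> j \<in> Z) \<and>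
     (\<forall>j\<in>J. \<forall>x y. \<psi> j (x + y) = \<psi> j x + \<psi> j y) \<and> (\<forall>j\<in>J. \<forall>x a. \<psi> j (rE x a) = \<psi> j x * a) \<and>
     (\<forall>x. x = (\<Sum>j\<in>J. rE (\<xi> j) (\<psi> j x)))"
proof -
  obtain n :: nat and i :: "'e \<Rightarrow> nat \<Rightarrow> 'a" and p :: "(nat \<Rightarrow> 'a) \<Rightarrow> 'e" where
    ip: "\<forall>x k. n \<le> k \<longrightarrow> i x k = 0" "\<forall>x y. i (x + y) = (\<lambda>k. i x k + i y k)" "\<forall>x a. i (rE x a) = (\<lambda>k. i x k * a)"
        "\<forall>v w. p (\<lambda>k. v k + w k) = p v + p w" "\<forall>v a. p (\<lambda>k. v k * a) = rE (p v) a" "\<forall>x. p (i x) = x"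
    using fgp unfolding fg_projective_right_def by blast
  define \<delta> where "\<delta> k = (\<lambda>j::nat. if j = k then (1::'a) else 0)" for k
  define e where "e k = p (\<delta> k)" for k
  have p0: "p (\<lambda>k. 0) = 0"
  proof -
    have "p (\<lambda>k. 0) = p (\<lambda>k. 0) + p (\<lambda>k. 0)" using ip(4)[rule_format, of "\<lambda>k. 0" "\<lambda>k. 0"] by simp
    then show ?thesis by simp
  qed
  have psum: "p (\<lambda>j. \<Sum>k\<in>K. f k j) = (\<Sum>k\<in>K. p (f k))" if "finite K" for K and f :: "nat \<Rightarrow> nat \<Rightarrow> 'a"
    using that
  proof induction
    case empty then show ?case by (simp add: p0)
  next
    case (insert a K)
    have "p (\<lambda>j. \<Sum>k\<in>insert a K. f k j) = p (\<lambda>j. f a j + (\<Sum>k\<in>K. f k j))"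
      using insert(1,2) by simp
    also have "\<dots> = p (f a) + p (\<lambda>j. \<Sum>k\<in>K. f k j)" using ip(4) by (metis (no_types))
    finally show ?case using insert by simp
  qed
  have pd: "p (\<lambda>j. \<delta> k j * c) = rE (e k) c" for k c using ip(5) e_def by simp
  have xexp: "x = (\<Sum>k<n. rE (e k) (i x k))" for x
  proof -
    have "i x = (\<lambda>j. \<Sum>k<n. \<delta> k j * i x k)"
    proof
      fix j
      show "i x j = (\<Sum>k<n. \<delta> k j * i x k)"
      proof -
        have "(\<Sum>k<n. \<delta> k j * i x k) = (\<Sum>k<n. if j = k then i x k else 0)"
          by (rule sum.cong) (simp_all add: \<delta>_def)
        also have "\<dots> = (if j \<in> {..<n} then i x j else 0)" by (simp add: sum.delta)
        also have "\<dots> = i x j" using ip(1) by auto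
        finally show ?thesis by simp
      qed
    qed
    then have "x = p (\<lambda>j. \<Sum>k<n. \<delta> k j * i x k)" using ip(6) by metis
    also have "\<dots> = (\<Sum>k<n. p (\<lambda>j. \<delta> k j * i x k))" by (rule psum) simp
    also have "\<dots> = (\<Sum>k<n. rE (e k) (i x k))" by (simp add: pd)
    finally show ?thesis .
  qed
  have "\<forall>k. \<exists>y. Poly_Mapping.keys y \<subseteq> Z \<times> UNIV \<and> lift2 rE y = e k"
    using tensor_surj[OF cond1] by blast
  then obtain Y where Y: "\<And>k. Poly_Mapping.keys (Y k) \<subseteq> Z \<times> UNIV" "\<And>k. lift2 rE (Y k) = e k" by metis
  define c where "c k q = zmult (Poly_Mapping.lookup (Y k) q) (snd q)" for k q
  have eexp: "e k = (\<Sum>q\<in>Poly_Mapping.keys (Y k). rE (fst q) (c k q))" for k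
  proof -
    have "e k = lift2 rE (Y k)" using Y(2) by simp
    also have "\<dots> = (\<Sum>q\<in>Poly_Mapping.keys (Y k). zmult (Poly_Mapping.lookup (Y k) q) (rE (fst q) (snd q)))"
      by (simp add: lift2_def)
    also have "\<dots> = (\<Sum>q\<in>Poly_Mapping.keys (Y k). rE (fst q) (c k q))"
      unfolding c_def by (rule sum.cong) (simp_all add: zmult_hom[OF E_hom_ra])
    finally show ?thesis .
  qed
  define J where "J = Sigma {..<n} (\<lambda>k. Poly_Mapping.keys (Y k))"
  define \<xi> :: "nat \<times> ('e \<times> 'a) \<Rightarrow> 'e" where "\<xi> j = fst (snd j)" for j
  define \<psi> :: "nat \<times> ('e \<times> 'a) \<Rightarrow> 'e \<Rightarrow> 'a" where "\<psi> j x = c (fst j) (snd j) * i x (fst j)" for j x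
  have "finite J" unfolding J_def by simp
  moreover have "\<forall>j\<in>J. \<xi> j \<in> Z" unfolding J_def \<xi>_def using Y(1) by force
  moreover have "\<forall>j\<in>J. \<forall>x y. \<psi> j (x + y) = \<psi> j x + \<psi> j y"
    unfolding \<psi>_def using ip(2) by (simp add: distrib_left)
  moreover have "\<forall>j\<in>J. \<forall>x a. \<psi> j (rE x a) = \<psi> j x * a"
    unfolding \<psi>_def using ip(3) by (simp add: mult.assoc)
  moreover have "\<forall>x. x = (\<Sum>j\<in>J. rE (\<xi> j) (\<psi> j x))"
  proof
    fix x
    have "x = (\<Sum>k<n. rE (\<Sum>q\<in>Poly_Mapping.keys (Y k). rE (fst q) (c k q)) (i x k))"
      using xexp[of x] eexp by simp
    also have "\<dots> = (\<Sum>k<n. \<Sum>q\<in>Poly_Mapping.keys (Y k). rE (fst q) (c k q * i x k))"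
      by (simp add: E_rsumx E_rmult)
    also have "\<dots> = (\<Sum>j\<in>J. rE (\<xi> j) (\<psi> j x))"
      unfolding J_def \<xi>_def \<psi>_def by (subst sum.Sigma) (auto simp: split_beta)
    finally show "x = (\<Sum>j\<in>J. rE (\<xi> j) (\<psi> j x))" .
  qed
  ultimately show ?thesis by blast
qed

lemma dual_exists:
  assumes "\<forall>x y. f (x + y) = f x + f y" "\<forall>x a. f (rE x a) = f x * a"
  shows "\<exists>e. \<forall>x. g (tEE e x) = f x"
proof -
  have "f \<in> right_dual rE" using assms by (simp add: right_dual_def addhom_def)
  then have "f \<in> range (\<lambda>e x. g (tEE e x))" using g_nondeg unfolding bij_betw_def by simp
  then obtain e where "f = (\<lambda>x. g (tEE e x))" by blast
  then show ?thesis by auto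
qed

end



locale LCF = LC +
  fixes J and \<xi> and \<xi>' and \<psi>
  assumes finJ: "finite J"
    and \<xi>Z: "\<forall>j\<in>J. \<xi> j \<in> bcenter lE rE"
    and \<psi>_add: "\<forall>j\<in>J. \<forall>x y. \<psi> j (x + y) = \<psi> j x + \<psi> j y"
    and \<psi>_r: "\<forall>j\<in>J. \<forall>x a. \<psi> j (rE x a) = \<psi> j x * a"
    and frame: "\<forall>x. x = (\<Sum>j\<in>J. rE (\<xi> j) (\<psi> j x))"
    and dual: "\<forall>j\<in>J. \<forall>x. g (tEE (\<xi>' j) x) = \<psi> j x"

context LCF begin

lemma fr: "(\<Sum>j\<in>J. rE (\<xi> j) (\<psi> j x)) = x" using frame by metis
lemma xiZ: "j \<in> J \<Longrightarrow> \<xi> j \<in> Z" using \<xi>Z by blast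
lemma cen: "\<omega> \<in> Z \<Longrightarrow> lE a \<omega> = rE \<omega> a" by (simp add: Z_iff)
lemma dual': "j \<in> J \<Longrightarrow> g (tEE (\<xi>' j) x) = \<psi> j x" using dual by blast
lemma psi_add: "j \<in> J \<Longrightarrow> \<psi> j (x + y) = \<psi> j x + \<psi> j y" using \<psi>_add by blast
lemma psi_r: "j \<in> J \<Longrightarrow> \<psi> j (rE x a) = \<psi> j x * a" using \<psi>_r by blast

lemma E_ext:
  fixes Fa Fb :: "_ \<Rightarrow> 'y::ab_group_add"
  assumes "\<forall>a b. Fa (a + b) = Fa a + Fa b" "\<forall>a b. Fb (a + b) = Fb a + Fb b"
    and "\<And>j c. j \<in> J \<Longrightarrow> Fa (rE (\<xi> j) c) = Fb (rE (\<xi> j) c)"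
  shows "Fa x = Fb x"
proof -
  have "Fa x = Fa (\<Sum>j\<in>J. rE (\<xi> j) (\<psi> j x))" by (simp add: fr)
  also have "\<dots> = (\<Sum>j\<in>J. Fa (rE (\<xi> j) (\<psi> j x)))" by (rule hom_sum[OF assms(1)])
  also have "\<dots> = (\<Sum>j\<in>J. Fb (rE (\<xi> j) (\<psi> j x)))" by (rule sum.cong) (simp_all add: assms(3))
  also have "\<dots> = Fb (\<Sum>j\<in>J. rE (\<xi> j) (\<psi> j x))" by (rule hom_sum[OF assms(2), symmetric])
  also have "\<dots> = Fb x" by (simp add: fr)
  finally show ?thesis .
qed

lemma Z_add: "u \<in> Z \<Longrightarrow> v \<in> Z \<Longrightarrow> u + v \<in> Z"
  by (simp add: Z_iff E_laddr E_raddl)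

lemma Z_rz: assumes "u \<in> Z" "z \<in> acenter" shows "rE u z \<in> Z"
proof -
  have "lE a (rE u z) = rE (rE u z) a" for a
  proof -
    have "lE a (rE u z) = rE (rE u a) z" using assms(1) by (simp add: E_lr cen)
    also have "\<dots> = rE u (a * z)" by (simp add: E_rmult)
    also have "\<dots> = rE u (z * a)" using assms(2) by (simp add: acenter_def)
    also have "\<dots> = rE (rE u z) a" by (simp add: E_rmult)
    finally show ?thesis .
  qed
  then show ?thesis by (simp add: Z_iff)
qed

lemma zsym: assumes "z \<in> acenter" shows "lE z x = rE x z"
proof (rule E_ext[where Fa="lE z" and Fb="\<lambda>x. rE x z"])
  show "\<forall>a b. lE z (a + b) = lE z a + lE z b" by (simp add: E_laddr)
  show "\<forall>a b. rE (a + b) z = rE a z + rE b z" by (simp add: E_raddl)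
  fix j c assume j: "j \<in> J"
  have "lE z (rE (\<xi> j) c) = rE (rE (\<xi> j) z) c" using xiZ[OF j] by (simp add: E_lr cen)
  also have "\<dots> = rE (\<xi> j) (z * c)" by (simp add: E_rmult)
  also have "\<dots> = rE (\<xi> j) (c * z)" using assms by (simp add: acenter_def)
  also have "\<dots> = rE (rE (\<xi> j) c) z" by (simp add: E_rmult)
  finally show "lE z (rE (\<xi> j) c) = rE (rE (\<xi> j) c) z" .
qed

lemma tEE_mv: "v \<in> Z \<Longrightarrow> tEE x (rE v c) = tEE (rE x c) v"
  by (simp add: tEE_bal cen)

lemma T_ext:
  fixes Fa Fb :: "_ \<Rightarrow> 'y::ab_group_add"
  assumes hf: "\<forall>a b. Fa (a + b) = Fa a + Fa b" and hg: "\<forall>a b. Fb (a + b) = Fb a + Fb b"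
    and gen: "\<And>u v c. u \<in> Z \<Longrightarrow> v \<in> Z \<Longrightarrow> Fa (rT (tEE u v) c) = Fb (rT (tEE u v) c)"
  shows "Fa \<tau> = Fb \<tau>"
proof (rule hom_eq_tensor[OF tens_EE hf hg])
  have s1: "Fa (tEE u n) = Fb (tEE u n)" if u: "u \<in> Z" for u n
  proof (rule E_ext[where Fa="\<lambda>n. Fa (tEE u n)" and Fb="\<lambda>n. Fb (tEE u n)"])
    show "\<forall>a b. Fa (tEE u (a + b)) = Fa (tEE u a) + Fa (tEE u b)" using hf by (simp add: tEE_addr)
    show "\<forall>a b. Fb (tEE u (a + b)) = Fb (tEE u a) + Fb (tEE u b)" using hg by (simp add: tEE_addr)
    fix j c assume "j \<in> J"
    then show "Fa (tEE u (rE (\<xi> j) c)) = Fb (tEE u (rE (\<xi> j) c))"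
      using gen[OF u xiZ] by (simp add: rT_t)
  qed
  fix m n
  show "Fa (tEE m n) = Fb (tEE m n)"
  proof (rule E_ext[where Fa="\<lambda>m. Fa (tEE m n)" and Fb="\<lambda>m. Fb (tEE m n)"])
    show "\<forall>a b. Fa (tEE (a + b) n) = Fa (tEE a n) + Fa (tEE b n)" using hf by (simp add: tEE_addl)
    show "\<forall>a b. Fb (tEE (a + b) n) = Fb (tEE a n) + Fb (tEE b n)" using hg by (simp add: tEE_addl)
    fix j c assume "j \<in> J"
    then show "Fa (tEE (rE (\<xi> j) c) n) = Fb (tEE (rE (\<xi> j) c) n)"
      using s1[OF xiZ] by (simp add: tEE_bal)
  qed
qed

lemma sig_flip1: assumes "\<eta> \<in> Z" shows "\<sigma> (tEE x \<eta>) = tEE \<eta> x"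
proof (rule E_ext[where Fa="\<lambda>x. \<sigma> (tEE x \<eta>)" and Fb="\<lambda>x. tEE \<eta> x"])
  show "\<forall>a b. \<sigma> (tEE (a + b) \<eta>) = \<sigma> (tEE a \<eta>) + \<sigma> (tEE b \<eta>)" by (simp add: tEE_addl sig_add)
  show "\<forall>a b. tEE \<eta> (a + b) = tEE \<eta> a + tEE \<eta> b" by (simp add: tEE_addr)
  fix j c assume j: "j \<in> J"
  have "tEE (rE (\<xi> j) c) \<eta> = rT (tEE (\<xi> j) \<eta>) c" using assms by (simp add: tEE_bal cen rT_t)
  then have "\<sigma> (tEE (rE (\<xi> j) c) \<eta>) = \<sigma> (rT (tEE (\<xi> j) \<eta>) c)" by simp
  also have "\<dots> = rT (\<sigma> (tEE (\<xi> j) \<eta>)) c" by (rule sig_r)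
  also have "\<dots> = rT (tEE \<eta> (\<xi> j)) c" using sig_flip[OF xiZ[OF j] assms] by simp
  also have "\<dots> = tEE \<eta> (rE (\<xi> j) c)" by (rule rT_t)
  finally show "\<sigma> (tEE (rE (\<xi> j) c) \<eta>) = tEE \<eta> (rE (\<xi> j) c)" .
qed

lemma sig_flip2: assumes "\<eta> \<in> Z" shows "\<sigma> (tEE \<eta> x) = tEE x \<eta>"
proof (rule E_ext[where Fa="\<lambda>x. \<sigma> (tEE \<eta> x)" and Fb="\<lambda>x. tEE x \<eta>"])
  show "\<forall>a b. \<sigma> (tEE \<eta> (a + b)) = \<sigma> (tEE \<eta> a) + \<sigma> (tEE \<eta> b)" by (simp add: tEE_addr sig_add)
  show "\<forall>a b. tEE (a + b) \<eta> = tEE a \<eta> + tEE b \<eta>" by (simp add: tEE_addl)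
  fix j c assume j: "j \<in> J"
  have "\<sigma> (tEE \<eta> (rE (\<xi> j) c)) = \<sigma> (rT (tEE \<eta> (\<xi> j)) c)" by (simp add: rT_t)
  also have "\<dots> = rT (\<sigma> (tEE \<eta> (\<xi> j))) c" by (rule sig_r)
  also have "\<dots> = rT (tEE (\<xi> j) \<eta>) c" using sig_flip[OF assms xiZ[OF j]] by simp
  also have "\<dots> = tEE (rE (\<xi> j) c) \<eta>" using assms by (simp add: tEE_bal cen rT_t)
  finally show "\<sigma> (tEE \<eta> (rE (\<xi> j) c)) = tEE (rE (\<xi> j) c) \<eta>" .
qed

lemma g_swap: "\<eta> \<in> Z \<Longrightarrow> g (tEE \<eta> x) = g (tEE x \<eta>)"
  using g_sym sig_flip1 by metis

lemma g_cent: assumes "\<omega> \<in> Z" "\<eta> \<in> Z" shows "g (tEE \<omega> \<eta>) * a = a * g (tEE \<omega> \<eta>)"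
proof -
  have "a * g (tEE \<omega> \<eta>) = g (tEE (lE a \<omega>) \<eta>)" by (simp add: g_tl)
  also have "\<dots> = g (tEE \<omega> (rE \<eta> a))" using assms by (simp add: cen tEE_bal)
  also have "\<dots> = g (tEE \<omega> \<eta>) * a" by (simp add: g_tr)
  finally show ?thesis by simp
qed

lemma gE_r: "\<zeta> \<in> Z \<Longrightarrow> g (tEE (rE x c) \<zeta>) = g (tEE x \<zeta>) * c"
  by (simp add: tEE_bal cen g_tr)

lemma lT_c: assumes "u \<in> Z" "v \<in> Z" shows "lT a (tEE u v) = rT (tEE u v) a"
  using assms by (simp add: lT_t cen tEE_bal rT_t)

lemma sig_l: "\<sigma> (lT a \<tau>) = lT a (\<sigma> \<tau>)"
proof (rule T_ext[where Fa="\<lambda>\<tau>. \<sigma> (lT a \<tau>)" and Fb="\<lambda>\<tau>. lT a (\<sigma> \<tau>)"])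
  show "\<forall>x y. \<sigma> (lT a (x + y)) = \<sigma> (lT a x) + \<sigma> (lT a y)" by (simp add: T_laddr sig_add)
  show "\<forall>x y. lT a (\<sigma> (x + y)) = lT a (\<sigma> x) + lT a (\<sigma> y)" by (simp add: T_laddr sig_add)
  fix u v c assume uv: "u \<in> Z" "v \<in> Z"
  have "\<sigma> (lT a (rT (tEE u v) c)) = \<sigma> (rT (rT (tEE u v) a) c)" using uv by (simp add: T_lr lT_c)
  also have "\<dots> = rT (rT (tEE v u) a) c" using uv by (simp add: sig_r sig_flip)
  also have "\<dots> = lT a (rT (tEE v u) c)" using uv by (simp add: T_lr lT_c)
  also have "\<dots> = lT a (\<sigma> (rT (tEE u v) c))" using uv by (simp add: sig_r sig_flip)
  finally show "\<sigma> (lT a (rT (tEE u v) c)) = lT a (\<sigma> (rT (tEE u v) c))" .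
qed

lemma bal_s23: "bal UNIV UNIV UNIV rE lT (\<lambda>x \<tau>. tES x (\<sigma> \<tau>))"
  by (rule balI) (simp_all add: tES_addl tES_addr sig_add tES_bal sig_l)

lemma s23_t: "sigma23 \<sigma> tES (tES x \<tau>) = tES x (\<sigma> \<tau>)"
  unfolding sigma23_def by (rule tmap_t[OF tens_ES bal_s23])
lemma s23_hom: "\<forall>a b. sigma23 \<sigma> tES (a + b) = sigma23 \<sigma> tES a + sigma23 \<sigma> tES b"
  unfolding sigma23_def by (rule tmap_hom[OF tens_ES bal_s23])
lemma s23_add: "sigma23 \<sigma> tES (a + b) = sigma23 \<sigma> tES a + sigma23 \<sigma> tES b"
  using s23_hom by blast

definition NN where
  "NN \<tau> \<eta> = gid lE tEE tES g (sigma23 \<sigma> tES (tens_r tEE tES \<tau> \<eta>))"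

lemma N_add: "NN (a + b) \<eta> = NN a \<eta> + NN b \<eta>"
  by (simp add: NN_def tr_add s23_add gid_add)
lemma N_hom: "\<forall>a b. NN (a + b) \<eta> = NN a \<eta> + NN b \<eta>" by (simp add: N_add)
lemma N_diff: "NN (a - b) \<eta> = NN a \<eta> - NN b \<eta>" by (rule hom_diff[OF N_hom])
lemma N_t: "NN (tEE x y) \<eta> = Pin x (\<sigma> (tEE y \<eta>))"
  by (simp add: NN_def tr_t s23_t gid_t)

lemma N_r: "NN \<tau> (rE \<eta> a) = rE (NN \<tau> \<eta>) a"
  by (rule hom_eq_tensor[OF tens_EE, where f="\<lambda>\<tau>. NN \<tau> (rE \<eta> a)" and g="\<lambda>\<tau>. rE (NN \<tau> \<eta>) a"])
     (simp_all add: N_add E_raddl N_t rT_t[symmetric] sig_r Pin_r)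

lemma N_addr: "NN \<tau> (\<eta> + \<eta>') = NN \<tau> \<eta> + NN \<tau> \<eta>'"
  by (rule hom_eq_tensor[OF tens_EE, where f="\<lambda>\<tau>. NN \<tau> (\<eta> + \<eta>')" and g="\<lambda>\<tau>. NN \<tau> \<eta> + NN \<tau> \<eta>'"])
     (simp_all add: N_add N_t tEE_addr sig_add Pin_add algebra_simps)

lemma N_cen: assumes "\<eta> \<in> Z" shows "NN \<tau> \<eta> = Pin \<eta> \<tau>"
  by (rule hom_eq_tensor[OF tens_EE, where f="\<lambda>\<tau>. NN \<tau> \<eta>" and g="\<lambda>\<tau>. Pin \<eta> \<tau>"])
     (simp_all add: N_add Pin_add N_t sig_flip1[OF assms] Pin_t g_swap[OF assms])

lemma sig_rc: assumes "u \<in> Z" "v \<in> Z" shows "\<sigma> (rT (tEE u v) c) = tEE v (rE u c)"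
proof -
  have "\<sigma> (rT (tEE u v) c) = rT (\<sigma> (tEE u v)) c" by (rule sig_r)
  also have "\<dots> = rT (tEE v u) c" using sig_flip[OF assms] by simp
  also have "\<dots> = tEE v (rE u c)" by (rule rT_t)
  finally show ?thesis .
qed

lemma KK_rc: "\<eta> \<in> Z \<Longrightarrow> KK (tEE v (rE u c)) \<eta> = rE v (g (tEE u \<eta>) * c)"
  by (simp add: K_t gE_r)

lemma Pin_sig: assumes "\<eta> \<in> Z" shows "Pin \<eta> \<tau> = KK (\<sigma> \<tau>) \<eta>"
proof (rule T_ext[where Fa="\<lambda>\<tau>. Pin \<eta> \<tau>" and Fb="\<lambda>\<tau>. KK (\<sigma> \<tau>) \<eta>"])
  show "\<forall>a b. Pin \<eta> (a + b) = Pin \<eta> a + Pin \<eta> b" by (simp add: Pin_add)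
  show "\<forall>a b. KK (\<sigma> (a + b)) \<eta> = KK (\<sigma> a) \<eta> + KK (\<sigma> b) \<eta>" by (simp add: sig_add K_add)
  fix u v c assume uv: "u \<in> Z" "v \<in> Z"
  have "Pin \<eta> (rT (tEE u v) c) = rE (rE v (g (tEE u \<eta>))) c"
    using uv assms by (simp add: Pin_r Pin_t cen g_swap)
  also have "\<dots> = rE v (g (tEE u \<eta>) * c)" by (simp add: E_rmult)
  also have "\<dots> = KK (\<sigma> (rT (tEE u v) c)) \<eta>"
    using uv assms by (simp add: sig_rc KK_rc)
  finally show "Pin \<eta> (rT (tEE u v) c) = KK (\<sigma> (rT (tEE u v) c)) \<eta>" .
qed

lemma K_sig: assumes "\<eta> \<in> Z" "\<zeta> \<in> Z"
  shows "g (tEE (KK (\<sigma> \<tau>) \<eta>) \<zeta>) = g (tEE (KK \<tau> \<zeta>) \<eta>)"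
proof (rule T_ext[where Fa="\<lambda>\<tau>. g (tEE (KK (\<sigma> \<tau>) \<eta>) \<zeta>)" and Fb="\<lambda>\<tau>. g (tEE (KK \<tau> \<zeta>) \<eta>)"])
  show "\<forall>a b. g (tEE (KK (\<sigma> (a + b)) \<eta>) \<zeta>) = g (tEE (KK (\<sigma> a) \<eta>) \<zeta>) + g (tEE (KK (\<sigma> b) \<eta>) \<zeta>)"
    by (simp add: sig_add K_add tEE_addl g_addx)
  show "\<forall>a b. g (tEE (KK (a + b) \<zeta>) \<eta>) = g (tEE (KK a \<zeta>) \<eta>) + g (tEE (KK b \<zeta>) \<eta>)"
    by (simp add: K_add tEE_addl g_addx)
  fix u v c assume uv: "u \<in> Z" "v \<in> Z"
  have "g (tEE (KK (\<sigma> (rT (tEE u v) c)) \<eta>) \<zeta>) = g (tEE v \<zeta>) * (g (tEE u \<eta>) * c)"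
    using uv assms by (simp add: sig_rc KK_rc gE_r)
  also have "\<dots> = g (tEE u \<eta>) * (g (tEE v \<zeta>) * c)"
  proof -
    have e: "g (tEE u \<eta>) * g (tEE v \<zeta>) = g (tEE v \<zeta>) * g (tEE u \<eta>)" by (rule g_cent[OF uv(1) assms(1)])
    show ?thesis by (simp only: mult.assoc[symmetric] e)
  qed
  also have "\<dots> = g (tEE (KK (rT (tEE u v) c) \<zeta>) \<eta>)"
    using uv assms by (simp add: rT_t KK_rc gE_r)
  finally show "g (tEE (KK (\<sigma> (rT (tEE u v) c)) \<eta>) \<zeta>) = g (tEE (KK (rT (tEE u v) c) \<zeta>) \<eta>)" .
qed

lemma Xrep: "\<exists>X. \<tau> = (\<Sum>k\<in>J. tEE (X k) (\<xi> k))"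
proof (rule tensor_induct[OF tens_EE, where P="\<lambda>\<tau>. \<exists>X. \<tau> = (\<Sum>k\<in>J. tEE (X k) (\<xi> k))"])
  show "\<exists>X. 0 = (\<Sum>k\<in>J. tEE (X k) (\<xi> k))" by (rule exI[of _ "\<lambda>k. 0"]) (simp add: tEE_0l)
next
  fix a b assume "\<exists>X. a = (\<Sum>k\<in>J. tEE (X k) (\<xi> k))" "\<exists>X. b = (\<Sum>k\<in>J. tEE (X k) (\<xi> k))"
  then obtain X Y where "a = (\<Sum>k\<in>J. tEE (X k) (\<xi> k))" "b = (\<Sum>k\<in>J. tEE (Y k) (\<xi> k))" by blast
  then show "\<exists>X. a + b = (\<Sum>k\<in>J. tEE (X k) (\<xi> k))"
    by (intro exI[of _ "\<lambda>k. X k + Y k"]) (simp add: tEE_addl sum.distrib)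
next
  fix a assume "\<exists>X. a = (\<Sum>k\<in>J. tEE (X k) (\<xi> k))"
  then obtain X where "a = (\<Sum>k\<in>J. tEE (X k) (\<xi> k))" by blast
  then show "\<exists>X. - a = (\<Sum>k\<in>J. tEE (X k) (\<xi> k))"
    by (intro exI[of _ "\<lambda>k. - X k"]) (simp add: tEE_negl sum_negf)
next
  fix m n
  have "tEE m n = tEE m (\<Sum>k\<in>J. rE (\<xi> k) (\<psi> k n))" by (simp add: fr)
  also have "\<dots> = (\<Sum>k\<in>J. tEE (rE m (\<psi> k n)) (\<xi> k))"
    by (simp add: tEE_sumr) (rule sum.cong, simp_all add: tEE_mv xiZ)
  finally have e: "tEE m n = (\<Sum>k\<in>J. tEE (rE m (\<psi> k n)) (\<xi> k))" .
  show "\<exists>X. tEE m n = (\<Sum>k\<in>J. tEE (X k) (\<xi> k))"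
    by (rule exI[where x="\<lambda>k. rE m (\<psi> k n)"]) (simp add: e)
qed

lemma K_inj: assumes "\<forall>\<eta>. KK \<tau> \<eta> = 0" shows "\<tau> = 0"
proof -
  obtain X where X: "\<tau> = (\<Sum>k\<in>J. tEE (X k) (\<xi> k))" using Xrep by blast
  have z: "(\<Sum>k\<in>J. rE (X k) (\<psi> l (\<xi> k))) = 0" if l: "l \<in> J" for l
  proof -
    have "0 = KK \<tau> (\<xi>' l)" using assms by simp
    also have "\<dots> = (\<Sum>k\<in>J. rE (X k) (g (tEE (\<xi> k) (\<xi>' l))))" by (simp add: X K_sum K_t)
    also have "\<dots> = (\<Sum>k\<in>J. rE (X k) (\<psi> l (\<xi> k)))"
      by (rule sum.cong) (simp_all add: g_swap[OF xiZ] dual'[OF l])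
    finally show ?thesis by simp
  qed
  have "\<tau> = (\<Sum>k\<in>J. tEE (X k) (\<Sum>l\<in>J. rE (\<xi> l) (\<psi> l (\<xi> k))))" by (simp add: X fr)
  also have "\<dots> = (\<Sum>k\<in>J. \<Sum>l\<in>J. tEE (rE (X k) (\<psi> l (\<xi> k))) (\<xi> l))"
    by (simp add: tEE_sumr) (rule sum.cong, simp, rule sum.cong, simp_all add: tEE_mv xiZ)
  also have "\<dots> = (\<Sum>l\<in>J. \<Sum>k\<in>J. tEE (rE (X k) (\<psi> l (\<xi> k))) (\<xi> l))" by (rule sum.swap)
  also have "\<dots> = (\<Sum>l\<in>J. tEE (\<Sum>k\<in>J. rE (X k) (\<psi> l (\<xi> k))) (\<xi> l))" by (simp add: tEE_suml)
  also have "\<dots> = 0" by (simp add: z tEE_0l)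
  finally show ?thesis .
qed

lemma K_ext: "KK \<tau> \<eta> = (\<Sum>j\<in>J. rE (KK \<tau> (\<xi> j)) (\<psi> j \<eta>))"
proof -
  have "KK \<tau> \<eta> = KK \<tau> (\<Sum>j\<in>J. rE (\<xi> j) (\<psi> j \<eta>))" by (simp add: fr)
  also have "\<dots> = (\<Sum>j\<in>J. rE (KK \<tau> (\<xi> j)) (\<psi> j \<eta>))" by (simp add: K_sumr K_r)
  finally show ?thesis .
qed

lemma K_eq: assumes "\<And>\<eta>. \<eta> \<in> Z \<Longrightarrow> KK \<tau> \<eta> = KK \<tau>' \<eta>" shows "\<tau> = \<tau>'"
proof -
  have "\<forall>\<eta>. KK (\<tau> - \<tau>') \<eta> = 0"
  proof
    fix \<eta>
    have "KK (\<tau> - \<tau>') \<eta> = (\<Sum>j\<in>J. rE (KK (\<tau> - \<tau>') (\<xi> j)) (\<psi> j \<eta>))" by (rule K_ext)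
    also have "\<dots> = 0" by (simp add: K_diff assms xiZ E_r0x)
    finally show "KK (\<tau> - \<tau>') \<eta> = 0" .
  qed
  then have "\<tau> - \<tau>' = 0" by (rule K_inj)
  then show ?thesis by simp
qed

lemma g_inj: assumes "\<And>\<zeta>. g (tEE x \<zeta>) = g (tEE y \<zeta>)" shows "x = y"
proof -
  have "inj (\<lambda>e x. g (tEE e x))" using g_nondeg by (simp add: bij_betw_def)
  moreover have "(\<lambda>\<zeta>. g (tEE x \<zeta>)) = (\<lambda>\<zeta>. g (tEE y \<zeta>))" using assms by auto
  ultimately show ?thesis by (simp add: inj_def)
qed

lemma g_inj_c: assumes "\<And>\<zeta>. \<zeta> \<in> Z \<Longrightarrow> g (tEE x \<zeta>) = g (tEE y \<zeta>)" shows "x = y"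
proof (rule g_inj)
  fix \<zeta>
  show "g (tEE x \<zeta>) = g (tEE y \<zeta>)"
  proof (rule E_ext[where Fa="\<lambda>\<zeta>. g (tEE x \<zeta>)" and Fb="\<lambda>\<zeta>. g (tEE y \<zeta>)"])
    show "\<forall>a b. g (tEE x (a + b)) = g (tEE x a) + g (tEE x b)" by (simp add: tEE_addr g_addx)
    show "\<forall>a b. g (tEE y (a + b)) = g (tEE y a) + g (tEE y b)" by (simp add: tEE_addr g_addx)
    fix j c assume "j \<in> J"
    then show "g (tEE x (rE (\<xi> j) c)) = g (tEE y (rE (\<xi> j) c))" by (simp add: g_tr assms xiZ)
  qed
qed

lemma sym_N: assumes "\<sigma> \<tau> = \<tau>" "\<eta> \<in> Z" shows "NN \<tau> \<eta> = KK \<tau> \<eta>"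
  using N_cen[OF assms(2)] Pin_sig[OF assms(2)] assms(1) by simp

lemma sym_P: assumes "\<sigma> \<tau> = \<tau>" "\<eta> \<in> Z" shows "Pin \<eta> \<tau> = KK \<tau> \<eta>"
  using Pin_sig[OF assms(2)] assms(1) by simp

end



context LC begin

lemma d0_hom: "\<forall>a b. d0 (a + b) = d0 a + d0 b" using d0_add by (simp add: addhom_def)
lemma d0_addx: "d0 (a + b) = d0 a + d0 b" using d0_hom by blast
lemma d0_l: "d0 (a * b) = rE (d0 a) b + lE a (d0 b)" using d0_leib by blast
lemma d1_hom: "\<forall>a b. d1 (a + b) = d1 a + d1 b" using d1_add by (simp add: addhom_def)
lemma d1_addx: "d1 (a + b) = d1 a + d1 b" using d1_hom by blast
lemma d1_r: "d1 (rE \<omega> a) = rF (d1 \<omega>) a - wedge \<omega> (d0 a)" using d1_leib_r by blast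

lemma d0_one: "d0 1 = 0"
proof -
  have "d0 (1 * 1) = rE (d0 1) 1 + lE 1 (d0 1)" by (rule d0_l)
  then have "d0 1 = d0 1 + d0 1" by (simp add: E_rone E_lone)
  then show ?thesis by simp
qed

lemma d0_iota: "d0 (\<iota> c) = 0"
proof -
  have "d0 (\<iota> c * 1) = lE (\<iota> c) (d0 1)" using d0_C by blast
  then show ?thesis by (simp add: d0_one E_l0x)
qed

definition Qi :: "'f \<Rightarrow> 't" where "Qi \<theta> = the_inv_into Fs W \<theta>"

lemma Qi_in: "Qi \<theta> \<in> Fs"
  unfolding Qi_def using Q_iso by (simp add: bij_betw_def the_inv_into_into)
lemma W_Qi: "W (Qi \<theta>) = \<theta>"
  unfolding Qi_def using Q_iso by (simp add: f_the_inv_into_f_bij_betw)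
lemma Qi_eq: "k \<in> Fs \<Longrightarrow> W k = \<theta> \<Longrightarrow> Qi \<theta> = k"
  unfolding Qi_def using Q_iso by (auto simp: bij_betw_def the_inv_into_f_eq)
lemma Qi_add: "Qi (a + b) = Qi a + Qi b"
  by (rule Qi_eq) (simp_all add: F_add Qi_in W_add W_Qi)
lemma Qi_r: "Qi (rF \<theta> a) = rT (Qi \<theta>) a"
  by (rule Qi_eq) (simp_all add: F_right Qi_in W_r W_Qi)

end

context LCF begin

definition nab0 where "nab0 x = (\<Sum>j\<in>J. tEE (\<xi> j) (d0 (\<psi> j x)))"

lemma nab0_add: "nab0 (x + y) = nab0 x + nab0 y"
  unfolding nab0_def by (simp add: psi_add d0_addx tEE_addr sum.distrib cong: sum.cong)

lemma nab0_leib: "nab0 (rE x a) = rT (nab0 x) a + tEE x (d0 a)"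
proof -
  have "nab0 (rE x a) = (\<Sum>j\<in>J. rT (tEE (\<xi> j) (d0 (\<psi> j x))) a + tEE (rE (\<xi> j) (\<psi> j x)) (d0 a))"
    unfolding nab0_def by (rule sum.cong) (simp_all add: psi_r d0_l tEE_addr rT_t tEE_bal)
  also have "\<dots> = rT (nab0 x) a + tEE (\<Sum>j\<in>J. rE (\<xi> j) (\<psi> j x)) (d0 a)"
    by (simp add: sum.distrib nab0_def T_rsumx tEE_suml)
  also have "\<dots> = rT (nab0 x) a + tEE x (d0 a)" by (simp add: fr)
  finally show ?thesis .
qed

definition T0 where "T0 x = W (nab0 x) + d1 x"

lemma T0_add: "T0 (x + y) = T0 x + T0 y" by (simp add: T0_def nab0_add W_add d1_addx algebra_simps)
lemma T0_r: "T0 (rE x a) = rF (T0 x) a"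
  by (simp add: T0_def nab0_leib W_add W_r W_t d1_r F_raddl)

definition nab1 where "nab1 x = nab0 x - Qi (T0 x)"

lemma nab1_add: "nab1 (x + y) = nab1 x + nab1 y" by (simp add: nab1_def nab0_add T0_add Qi_add)
lemma nab1_hom: "\<forall>x y. nab1 (x + y) = nab1 x + nab1 y" by (simp add: nab1_add)
lemma nab1_leib: "nab1 (rE x a) = rT (nab1 x) a + tEE x (d0 a)"
  by (simp add: nab1_def nab0_leib T0_r Qi_r T_rdiffx)
lemma nab1_tors: "W (nab1 x) + d1 x = 0"
  by (simp add: nab1_def W_diff W_Qi T0_def)

definition DD where "DD \<omega> \<eta> = d0 (g (tEE \<omega> \<eta>)) - NN (nab1 \<omega>) \<eta> - Pin \<omega> (nab1 \<eta>)"

lemma D_addr: "DD \<omega> (\<eta> + \<eta>') = DD \<omega> \<eta> + DD \<omega> \<eta>'"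
  by (simp add: DD_def tEE_addr g_addx d0_addx N_addr nab1_add Pin_add algebra_simps)
lemma D_homr: "\<forall>a b. DD \<omega> (a + b) = DD \<omega> a + DD \<omega> b" by (simp add: D_addr)
lemma D_addl: "DD (\<omega> + \<omega>') \<eta> = DD \<omega> \<eta> + DD \<omega>' \<eta>"
  by (simp add: DD_def tEE_addl g_addx d0_addx N_add nab1_add Pin_addx algebra_simps)

lemma D_r: "DD \<omega> (rE \<eta> a) = rE (DD \<omega> \<eta>) a"
proof -
  have "DD \<omega> (rE \<eta> a) = (rE (d0 (g (tEE \<omega> \<eta>))) a + lE (g (tEE \<omega> \<eta>)) (d0 a))
      - rE (NN (nab1 \<omega>) \<eta>) a - (rE (Pin \<omega> (nab1 \<eta>)) a + lE (g (tEE \<omega> \<eta>)) (d0 a))"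
    by (simp add: DD_def g_tr d0_l N_r nab1_leib Pin_add Pin_r Pin_t)
  also have "\<dots> = rE (DD \<omega> \<eta>) a" by (simp add: DD_def E_rdiffx)
  finally show ?thesis .
qed

lemma D_sym: assumes "\<omega> \<in> Z" "\<eta> \<in> Z" shows "DD \<omega> \<eta> = DD \<eta> \<omega>"
  using assms by (simp add: DD_def N_cen g_swap[OF assms(1)] algebra_simps)

lemma D_frame: "DD \<omega> \<eta> = (\<Sum>j\<in>J. rE (DD \<omega> (\<xi> j)) (\<psi> j \<eta>))"
proof -
  have "DD \<omega> \<eta> = DD \<omega> (\<Sum>j\<in>J. rE (\<xi> j) (\<psi> j \<eta>))" by (simp add: fr)
  also have "\<dots> = (\<Sum>j\<in>J. rE (DD \<omega> (\<xi> j)) (\<psi> j \<eta>))" by (simp add: hom_sum[OF D_homr] D_r)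
  finally show ?thesis .
qed

lemma D_z: assumes "\<omega> \<in> Z" "z \<in> acenter" shows "DD (rE \<omega> z) \<eta> = rE (DD \<omega> \<eta>) z"
proof (rule E_ext[where Fa="\<lambda>\<eta>. DD (rE \<omega> z) \<eta>" and Fb="\<lambda>\<eta>. rE (DD \<omega> \<eta>) z"])
  show "\<forall>a b. DD (rE \<omega> z) (a + b) = DD (rE \<omega> z) a + DD (rE \<omega> z) b" by (simp add: D_addr)
  show "\<forall>a b. rE (DD \<omega> (a + b)) z = rE (DD \<omega> a) z + rE (DD \<omega> b) z" by (simp add: D_addr E_raddl)
  fix j c assume j: "j \<in> J"
  have wz: "rE \<omega> z \<in> Z" by (rule Z_rz[OF assms])
  have "DD (rE \<omega> z) (rE (\<xi> j) c) = rE (DD (\<xi> j) (rE \<omega> z)) c"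
    by (simp add: D_r D_sym[OF wz xiZ[OF j]])
  also have "\<dots> = rE (DD \<omega> (\<xi> j)) (z * c)" by (simp add: D_r D_sym[OF xiZ[OF j] assms(1)] E_rmult)
  also have "\<dots> = rE (DD \<omega> (\<xi> j)) (c * z)" using assms(2) by (simp add: acenter_def)
  also have "\<dots> = rE (DD \<omega> (rE (\<xi> j) c)) z" by (simp add: D_r E_rmult)
  finally show "DD (rE \<omega> z) (rE (\<xi> j) c) = rE (DD \<omega> (rE (\<xi> j) c)) z" .
qed

definition SS where
  "SS \<omega> \<eta> \<zeta> = (g (tEE (DD \<omega> \<eta>) \<zeta>) + g (tEE (DD \<omega> \<zeta>) \<eta>) - g (tEE (DD \<eta> \<zeta>) \<omega>)) * hh"

lemma hh_swap: "x * a * hh = x * hh * a" by (simp add: mult.assoc hh_central)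

lemma S_add3: "SS \<omega> \<eta> (x + y) = SS \<omega> \<eta> x + SS \<omega> \<eta> y"
  by (simp add: SS_def D_addr tEE_addr tEE_addl g_addx algebra_simps)

lemma S_r3: assumes "\<omega> \<in> Z" "\<eta> \<in> Z" shows "SS \<omega> \<eta> (rE x a) = SS \<omega> \<eta> x * a"
proof -
  have "SS \<omega> \<eta> (rE x a) = (g (tEE (DD \<omega> \<eta>) x) * a + g (tEE (DD \<omega> x) \<eta>) * a - g (tEE (DD \<eta> x) \<omega>) * a) * hh"
    using assms by (simp add: SS_def g_tr D_r gE_r)
  also have "\<dots> = (g (tEE (DD \<omega> \<eta>) x) + g (tEE (DD \<omega> x) \<eta>) - g (tEE (DD \<eta> x) \<omega>)) * a * hh"
    by (simp add: algebra_simps)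
  also have "\<dots> = SS \<omega> \<eta> x * a" by (simp add: SS_def hh_swap)
  finally show ?thesis .
qed

definition GG where "GG \<omega> \<eta> = the_inv_into UNIV (\<lambda>e x. g (tEE e x)) (\<lambda>\<zeta>. SS \<omega> \<eta> \<zeta>)"

lemma G_prop: assumes "\<omega> \<in> Z" "\<eta> \<in> Z" shows "g (tEE (GG \<omega> \<eta>) \<zeta>) = SS \<omega> \<eta> \<zeta>"
proof -
  have "(\<lambda>\<zeta>. SS \<omega> \<eta> \<zeta>) \<in> right_dual rE"
    using S_add3 S_r3[OF assms] by (simp add: right_dual_def addhom_def)
  then have "(\<lambda>x. g (tEE (GG \<omega> \<eta>) x)) = (\<lambda>\<zeta>. SS \<omega> \<eta> \<zeta>)"
    unfolding GG_def using f_the_inv_into_f_bij_betw[OF g_nondeg] by simp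
  then show ?thesis by metis
qed

lemma S_sym: assumes "\<omega> \<in> Z" "\<eta> \<in> Z" "\<zeta> \<in> Z" shows "SS \<omega> \<eta> \<zeta> = SS \<omega> \<zeta> \<eta>"
  using D_sym[OF assms(2,3)] by (simp add: SS_def algebra_simps)

end



context LCF begin

lemma G_eq: "(\<And>\<zeta>. g (tEE x \<zeta>) = g (tEE y \<zeta>)) \<Longrightarrow> x = y" by (rule g_inj)

lemma GG_addl: assumes "\<omega> \<in> Z" "\<omega>' \<in> Z" "\<eta> \<in> Z"
  shows "GG (\<omega> + \<omega>') \<eta> = GG \<omega> \<eta> + GG \<omega>' \<eta>"
proof (rule g_inj)
  fix \<zeta>
  have w: "\<omega> + \<omega>' \<in> Z" by (rule Z_add[OF assms(1,2)])
  show "g (tEE (GG (\<omega> + \<omega>') \<eta>) \<zeta>) = g (tEE (GG \<omega> \<eta> + GG \<omega>' \<eta>) \<zeta>)"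
    using assms by (simp add: G_prop[OF w assms(3)] tEE_addl g_addx G_prop SS_def D_addl tEE_addr algebra_simps)
qed

lemma GG_z: assumes "\<omega> \<in> Z" "z \<in> acenter" "\<eta> \<in> Z"
  shows "GG (rE \<omega> z) \<eta> = rE (GG \<omega> \<eta>) z"
proof (rule g_inj)
  fix \<zeta>
  have w: "rE \<omega> z \<in> Z" by (rule Z_rz[OF assms(1,2)])
  have gz: "g (tEE (rE x z) y) = g (tEE x y) * z" for x y using assms(2) by (simp add: tEE_bal zsym g_tr)
  have "g (tEE (GG (rE \<omega> z) \<eta>) \<zeta>) =
     (g (tEE (DD \<omega> \<eta>) \<zeta>) * z + g (tEE (DD \<omega> \<zeta>) \<eta>) * z - g (tEE (DD \<eta> \<zeta>) \<omega>) * z) * hh"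
    using assms by (simp add: G_prop[OF w assms(3)] SS_def D_z gz g_tr)
  also have "\<dots> = (g (tEE (DD \<omega> \<eta>) \<zeta>) + g (tEE (DD \<omega> \<zeta>) \<eta>) - g (tEE (DD \<eta> \<zeta>) \<omega>)) * z * hh"
    by (simp add: algebra_simps)
  also have "\<dots> = g (tEE (rE (GG \<omega> \<eta>) z) \<zeta>)"
    by (simp add: gz G_prop[OF assms(1,3)] SS_def hh_swap)
  finally show "g (tEE (GG (rE \<omega> z) \<eta>) \<zeta>) = g (tEE (rE (GG \<omega> \<eta>) z) \<zeta>)" .
qed

definition tau where "tau \<omega> = (\<Sum>j\<in>J. tEE (GG \<omega> (\<xi> j)) (\<xi>' j))"

lemma tau_K: "KK (tau \<omega>) \<eta> = (\<Sum>j\<in>J. rE (GG \<omega> (\<xi> j)) (\<psi> j \<eta>))"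
  unfolding tau_def by (simp add: K_sum K_t dual' cong: sum.cong)

lemma tau_G: assumes "\<omega> \<in> Z" "\<eta> \<in> Z" shows "KK (tau \<omega>) \<eta> = GG \<omega> \<eta>"
proof (rule g_inj_c)
  fix \<zeta> assume z: "\<zeta> \<in> Z"
  have sA: "(\<Sum>j\<in>J. g (tEE (DD \<omega> (\<xi> j)) \<zeta>) * \<psi> j \<eta>) = g (tEE (DD \<omega> \<eta>) \<zeta>)"
  proof -
    have "(\<Sum>j\<in>J. g (tEE (DD \<omega> (\<xi> j)) \<zeta>) * \<psi> j \<eta>) = g (tEE (\<Sum>j\<in>J. rE (DD \<omega> (\<xi> j)) (\<psi> j \<eta>)) \<zeta>)"
      using z by (simp add: tEE_suml g_sum gE_r)
    then show ?thesis by (simp add: D_frame[symmetric])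
  qed
  have sB: "(\<Sum>j\<in>J. g (tEE (DD \<omega> \<zeta>) (\<xi> j)) * \<psi> j \<eta>) = g (tEE (DD \<omega> \<zeta>) \<eta>)"
  proof -
    have "(\<Sum>j\<in>J. g (tEE (DD \<omega> \<zeta>) (\<xi> j)) * \<psi> j \<eta>) = g (tEE (DD \<omega> \<zeta>) (\<Sum>j\<in>J. rE (\<xi> j) (\<psi> j \<eta>)))"
      by (simp add: tEE_sumr g_sum g_tr)
    then show ?thesis by (simp add: fr)
  qed
  have sC: "(\<Sum>j\<in>J. g (tEE (DD (\<xi> j) \<zeta>) \<omega>) * \<psi> j \<eta>) = g (tEE (DD \<eta> \<zeta>) \<omega>)"
  proof -
    have "(\<Sum>j\<in>J. g (tEE (DD (\<xi> j) \<zeta>) \<omega>) * \<psi> j \<eta>) = (\<Sum>j\<in>J. g (tEE (rE (DD \<zeta> (\<xi> j)) (\<psi> j \<eta>)) \<omega>))"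
      by (rule sum.cong) (simp_all add: D_sym[OF xiZ z] gE_r[OF assms(1)])
    also have "\<dots> = g (tEE (DD \<zeta> \<eta>) \<omega>)" by (simp add: tEE_suml[symmetric] g_sum[symmetric] D_frame[symmetric])
    also have "\<dots> = g (tEE (DD \<eta> \<zeta>) \<omega>)" by (simp add: D_sym[OF z assms(2)])
    finally show ?thesis .
  qed
  have "g (tEE (KK (tau \<omega>) \<eta>) \<zeta>) = (\<Sum>j\<in>J. SS \<omega> (\<xi> j) \<zeta> * \<psi> j \<eta>)"
    using z assms by (simp add: tau_K tEE_suml g_sum gE_r G_prop xiZ cong: sum.cong)
  also have "\<dots> = (\<Sum>j\<in>J. (g (tEE (DD \<omega> (\<xi> j)) \<zeta>) * \<psi> j \<eta> + g (tEE (DD \<omega> \<zeta>) (\<xi> j)) * \<psi> j \<eta>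
        - g (tEE (DD (\<xi> j) \<zeta>) \<omega>) * \<psi> j \<eta>) * hh)"
    by (rule sum.cong) (simp_all add: SS_def algebra_simps hh_central)
  also have "\<dots> = ((\<Sum>j\<in>J. g (tEE (DD \<omega> (\<xi> j)) \<zeta>) * \<psi> j \<eta>) + (\<Sum>j\<in>J. g (tEE (DD \<omega> \<zeta>) (\<xi> j)) * \<psi> j \<eta>)
        - (\<Sum>j\<in>J. g (tEE (DD (\<xi> j) \<zeta>) \<omega>) * \<psi> j \<eta>)) * hh"
    by (simp add: sum_distrib_right[symmetric] sum.distrib sum_subtractf)
  also have "\<dots> = SS \<omega> \<eta> \<zeta>" by (simp add: sA sB sC SS_def)
  also have "\<dots> = g (tEE (GG \<omega> \<eta>) \<zeta>)" by (simp add: G_prop[OF assms])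
  finally show "g (tEE (KK (tau \<omega>) \<eta>) \<zeta>) = g (tEE (GG \<omega> \<eta>) \<zeta>)" .
qed

lemma tau_sym: assumes "\<omega> \<in> Z" shows "\<sigma> (tau \<omega>) = tau \<omega>"
proof (rule K_eq)
  fix \<eta> assume e: "\<eta> \<in> Z"
  show "KK (\<sigma> (tau \<omega>)) \<eta> = KK (tau \<omega>) \<eta>"
  proof (rule g_inj_c)
    fix \<zeta> assume z: "\<zeta> \<in> Z"
    have "g (tEE (KK (\<sigma> (tau \<omega>)) \<eta>) \<zeta>) = g (tEE (KK (tau \<omega>) \<zeta>) \<eta>)" by (rule K_sig[OF e z])
    also have "\<dots> = SS \<omega> \<zeta> \<eta>" by (simp add: tau_G[OF assms z] G_prop[OF assms z])
    also have "\<dots> = SS \<omega> \<eta> \<zeta>" by (rule S_sym[OF assms z e])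
    also have "\<dots> = g (tEE (KK (tau \<omega>) \<eta>) \<zeta>)" by (simp add: tau_G[OF assms e] G_prop[OF assms e])
    finally show "g (tEE (KK (\<sigma> (tau \<omega>)) \<eta>) \<zeta>) = g (tEE (KK (tau \<omega>) \<eta>) \<zeta>)" .
  qed
qed

lemma tau_W: "\<omega> \<in> Z \<Longrightarrow> W (tau \<omega>) = 0"
  by (rule sig_fixW[OF tau_sym])

lemma tau_add: assumes "\<omega> \<in> Z" "\<omega>' \<in> Z" shows "tau (\<omega> + \<omega>') = tau \<omega> + tau \<omega>'"
  unfolding tau_def using assms by (simp add: GG_addl xiZ tEE_addl sum.distrib cong: sum.cong)

lemma tau_z: assumes "\<omega> \<in> Z" "z \<in> acenter" shows "tau (rE \<omega> z) = rT (tau \<omega>) z"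
proof -
  have "tau (rE \<omega> z) = (\<Sum>j\<in>J. rT (tEE (GG \<omega> (\<xi> j)) (\<xi>' j)) z)"
    unfolding tau_def using assms by (intro sum.cong) (simp_all add: GG_z xiZ tEE_bal zsym rT_t)
  also have "\<dots> = rT (tau \<omega>) z" by (simp add: tau_def T_rsumx)
  finally show ?thesis .
qed

definition LL where "LL x = (\<Sum>j\<in>J. rT (tau (\<xi> j)) (\<psi> j x))"

lemma L_add: "LL (x + y) = LL x + LL y"
  unfolding LL_def by (simp add: psi_add T_raddr sum.distrib cong: sum.cong)
lemma L_r: "LL (rE x a) = rT (LL x) a"
  unfolding LL_def by (simp add: psi_r T_rmult T_rsumx cong: sum.cong)

lemma L_cen: assumes "\<omega> \<in> Z" shows "LL \<omega> = tau \<omega>"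
proof -
  define f where "f \<omega> a = rT (tau \<omega>) a" for \<omega> a
  have bf: "bal Z UNIV acenter rE (*) f"
    unfolding bal_def f_def by (simp add: tau_add T_raddl T_raddr tau_z T_rmult)
  define x1 where "x1 = Poly_Mapping.single (\<omega>, 1::'a) (1::int)"
  define x2 where "x2 = (\<Sum>j\<in>J. Poly_Mapping.single (\<xi> j, \<psi> j \<omega>) (1::int))"
  have k1: "Poly_Mapping.keys x1 \<subseteq> Z \<times> UNIV" using assms by (simp add: x1_def)
  have k2: "Poly_Mapping.keys x2 \<subseteq> Z \<times> UNIV"
  proof -
    have "Poly_Mapping.keys x2 \<subseteq> (\<Union>j\<in>J. Poly_Mapping.keys (Poly_Mapping.single (\<xi> j, \<psi> j \<omega>) (1::int)))"
      unfolding x2_def by (rule keys_sum)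
    then show ?thesis using xiZ by auto
  qed
  have "lift2 rE x1 = lift2 rE x2"
    by (simp add: x1_def x2_def lift2_single lift2_sum E_rone fr)
  then have "lift2 f x1 = lift2 f x2" by (rule tensor_lift_eq[OF cond1 bf k1 k2])
  then have "rT (tau \<omega>) 1 = (\<Sum>j\<in>J. rT (tau (\<xi> j)) (\<psi> j \<omega>))"
    by (simp add: x1_def x2_def lift2_single lift2_sum f_def)
  then show ?thesis by (simp add: LL_def T_rone)
qed

definition nab where "nab x = nab1 x + LL x"

lemma nab_conn: "is_connection \<iota> rE rT d0 tEE nab"
proof -
  have leib: "nab (rE x a) = rT (nab x) a + tEE x (d0 a)" for x a
    by (simp add: nab_def nab1_leib L_r T_raddl algebra_simps)
  show ?thesis unfolding is_connection_def
    by (simp add: addhom_def nab_def nab1_add L_add algebra_simps leib[unfolded nab_def] d0_iota tEE_0r)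
qed

lemma nab_tors: "torsionless tEE wedge d1 nab"
proof -
  have "W (LL x) = 0" for x
    by (simp add: LL_def W_sum W_r tau_W xiZ F_r0x cong: sum.cong)
  then show ?thesis unfolding torsionless_def
    using nab1_tors by (simp add: nab_def W_add algebra_simps)
qed

lemma GG_DD: assumes "\<omega> \<in> Z" "\<eta> \<in> Z" shows "GG \<omega> \<eta> + GG \<eta> \<omega> = DD \<omega> \<eta>"
proof (rule g_inj)
  fix \<zeta>
  show "g (tEE (GG \<omega> \<eta> + GG \<eta> \<omega>) \<zeta>) = g (tEE (DD \<omega> \<eta>) \<zeta>)"
  proof -
    have "g (tEE (GG \<omega> \<eta> + GG \<eta> \<omega>) \<zeta>) = SS \<omega> \<eta> \<zeta> + SS \<eta> \<omega> \<zeta>"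
      by (simp add: tEE_addl g_addx G_prop assms)
    also have "\<dots> = (g (tEE (DD \<omega> \<eta>) \<zeta>) + g (tEE (DD \<omega> \<eta>) \<zeta>)) * hh"
      by (simp add: SS_def D_sym[OF assms] algebra_simps)
    also have "\<dots> = g (tEE (DD \<omega> \<eta>) \<zeta>) * (hh + hh)" by (simp add: algebra_simps)
    also have "\<dots> = g (tEE (DD \<omega> \<eta>) \<zeta>)" by (simp add: hh_twice)
    finally show ?thesis .
  qed
qed

lemma nab_compat: "compatible_Z lE rE d0 tEE tES \<sigma> g nab"
  unfolding compatible_Z_def
proof (intro ballI)
  fix \<omega> \<eta> assume w: "\<omega> \<in> Z" and e: "\<eta> \<in> Z"
  have "gid lE tEE tES g (sigma23 \<sigma> tES (tens_r tEE tES (nab \<omega>) \<eta>)) = NN (nab \<omega>) \<eta>" by (simp add: NN_def)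
  also have "\<dots> = NN (nab1 \<omega>) \<eta> + GG \<omega> \<eta>"
    by (simp add: nab_def N_add L_cen[OF w] sym_N[OF tau_sym[OF w] e] tau_G[OF w e])
  finally have 1: "gid lE tEE tES g (sigma23 \<sigma> tES (tens_r tEE tES (nab \<omega>) \<eta>)) = NN (nab1 \<omega>) \<eta> + GG \<omega> \<eta>" .
  have "gid lE tEE tES g (tES \<omega> (nab \<eta>)) = Pin \<omega> (nab \<eta>)" by (simp add: gid_t)
  also have "\<dots> = Pin \<omega> (nab1 \<eta>) + GG \<eta> \<omega>"
    by (simp add: nab_def Pin_add L_cen[OF e] sym_P[OF tau_sym[OF e] w] tau_G[OF e w])
  finally have 2: "gid lE tEE tES g (tES \<omega> (nab \<eta>)) = Pin \<omega> (nab1 \<eta>) + GG \<eta> \<omega>" .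
  have "NN (nab1 \<omega>) \<eta> + GG \<omega> \<eta> + (Pin \<omega> (nab1 \<eta>) + GG \<eta> \<omega>) = NN (nab1 \<omega>) \<eta> + Pin \<omega> (nab1 \<eta>) + DD \<omega> \<eta>"
    using GG_DD[OF w e] by (simp add: algebra_simps)
  also have "\<dots> = d0 (g (tEE \<omega> \<eta>))" by (simp add: DD_def)
  finally show "gid lE tEE tES g (sigma23 \<sigma> tES (tens_r tEE tES (nab \<omega>) \<eta>)) + gid lE tEE tES g (tES \<omega> (nab \<eta>))
      = d0 (g (tEE \<omega> \<eta>))" using 1 2 by simp
qed

subsection \<open>Uniqueness\<close>

lemma a_half: "(x::'a) + x = 0 \<Longrightarrow> x = 0"
proof -
  assume h: "x + x = 0"
  have "x = x * (hh + hh)" by (simp add: hh_twice)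
  also have "\<dots> = (x + x) * hh" by (simp add: algebra_simps)
  finally show ?thesis using h by simp
qed

lemma unique:
  assumes c1: "is_connection \<iota> rE rT d0 tEE n1" "torsionless tEE wedge d1 n1" "compatible_Z lE rE d0 tEE tES \<sigma> g n1"
    and c2: "is_connection \<iota> rE rT d0 tEE n2" "torsionless tEE wedge d1 n2" "compatible_Z lE rE d0 tEE tES \<sigma> g n2"
  shows "n1 = n2"
proof -
  define La where "La x = n1 x - n2 x" for x
  have a1: "n1 (x + y) = n1 x + n1 y" for x y using c1(1) by (simp add: is_connection_def addhom_def)
  have a2: "n2 (x + y) = n2 x + n2 y" for x y using c2(1) by (simp add: is_connection_def addhom_def)
  have l1: "n1 (rE x a) = rT (n1 x) a + tEE x (d0 a)" for x a using c1(1) by (simp add: is_connection_def)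
  have l2: "n2 (rE x a) = rT (n2 x) a + tEE x (d0 a)" for x a using c2(1) by (simp add: is_connection_def)
  have La_add: "\<forall>x y. La (x + y) = La x + La y" by (simp add: La_def a1 a2 algebra_simps)
  have La_r: "La (rE x a) = rT (La x) a" for x a by (simp add: La_def l1 l2 T_rdiffx)
  have La_W: "W (La x) = 0" for x
  proof -
    have "W (n1 x) + d1 x = 0" "W (n2 x) + d1 x = 0" using c1(2) c2(2) by (simp_all add: torsionless_def)
    then show ?thesis by (simp add: La_def W_diff) (metis add_right_cancel)
  qed
  have La_sym: "\<sigma> (La x) = La x" for x by (rule sig_fix[OF La_W])
  have cK: "KK (La \<omega>) \<eta> + KK (La \<eta>) \<omega> = 0" if w: "\<omega> \<in> Z" and e: "\<eta> \<in> Z" for \<omega> \<eta>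
  proof -
    have "NN (n1 \<omega>) \<eta> + Pin \<omega> (n1 \<eta>) = d0 (g (tEE \<omega> \<eta>))"
      using c1(3) w e unfolding compatible_Z_def by (simp add: NN_def gid_t)
    moreover have "NN (n2 \<omega>) \<eta> + Pin \<omega> (n2 \<eta>) = d0 (g (tEE \<omega> \<eta>))"
      using c2(3) w e unfolding compatible_Z_def by (simp add: NN_def gid_t)
    ultimately have "NN (La \<omega>) \<eta> + Pin \<omega> (La \<eta>) = 0"
      by (simp add: La_def N_diff Pin_diff algebra_simps)
    then show ?thesis by (simp add: sym_N[OF La_sym e] sym_P[OF La_sym w])
  qed
  define s where "s a b c = g (tEE (KK (La a) b) c)" for a b c
  have anti: "s a b c = - s b a c" if "a \<in> Z" "b \<in> Z" for a b c
  proof -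
    have "s a b c + s b a c = g (tEE (KK (La a) b + KK (La b) a) c)" by (simp add: s_def tEE_addl g_addx)
    also have "\<dots> = 0" by (simp add: cK that tEE_0l g_0)
    finally show ?thesis by (simp add: eq_neg_iff_add_eq_0)
  qed
  have sym: "s a b c = s a c b" if "b \<in> Z" "c \<in> Z" for a b c
    unfolding s_def using K_sig[OF that, of "La a"] by (simp add: La_sym)
  have s0: "s a b c = 0" if "a \<in> Z" "b \<in> Z" "c \<in> Z" for a b c
  proof -
    have "s a b c = - s b a c" by (rule anti[OF that(1,2)])
    also have "\<dots> = - s b c a" using sym[OF that(1) that(3), of b] by simp
    also have "\<dots> = s c b a" using anti[OF that(2) that(3), of a] by simp
    also have "\<dots> = s c a b" using sym[OF that(2) that(1), of c] by simp
    also have "\<dots> = - s a c b" using anti[OF that(3) that(1), of b] by simp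
    also have "\<dots> = - s a b c" using sym[OF that(2) that(3), of a] by simp
    finally have "s a b c + s a b c = 0" by (simp add: eq_neg_iff_add_eq_0)
    then show ?thesis by (rule a_half)
  qed
  have La_cen: "La \<omega> = 0" if w: "\<omega> \<in> Z" for \<omega>
  proof -
    have "KK (La \<omega>) \<eta> = 0" if e: "\<eta> \<in> Z" for \<eta>
    proof (rule g_inj_c)
      fix \<zeta> assume "\<zeta> \<in> Z"
      then show "g (tEE (KK (La \<omega>) \<eta>) \<zeta>) = g (tEE 0 \<zeta>)"
        using s0[OF w e] by (simp add: s_def tEE_0l g_0)
    qed
    then have "La \<omega> = 0" by (intro K_eq) (simp add: K_0)
    then show ?thesis .
  qed
  have "La x = 0" for x
  proof -
    have "La x = La (\<Sum>j\<in>J. rE (\<xi> j) (\<psi> j x))" by (simp add: fr)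
    also have "\<dots> = (\<Sum>j\<in>J. La (rE (\<xi> j) (\<psi> j x)))" by (rule hom_sum[OF La_add])
    also have "\<dots> = 0" by (simp add: La_r La_cen xiZ T_r0x)
    finally show ?thesis .
  qed
  then show ?thesis by (intro ext) (simp add: La_def)
qed

theorem main:
  "\<exists>!nabla. is_connection \<iota> rE rT d0 tEE nabla \<and> torsionless tEE wedge d1 nabla \<and>
           compatible_Z lE rE d0 tEE tES \<sigma> g nabla"
  using nab_conn nab_tors nab_compat unique by blast

end

theorem theorem6p1:
  fixes \<iota> :: "complex \<Rightarrow> 'a::ring_1"
    and lE :: "'a \<Rightarrow> 'e::ab_group_add \<Rightarrow> 'e" and rE :: "'e \<Rightarrow> 'a \<Rightarrow> 'e"
    and lF :: "'a \<Rightarrow> 'f::ab_group_add \<Rightarrow> 'f" and rF :: "'f \<Rightarrow> 'a \<Rightarrow> 'f"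
    and d0 :: "'a \<Rightarrow> 'e" and d1 :: "'e \<Rightarrow> 'f" and wedge :: "'e \<Rightarrow> 'e \<Rightarrow> 'f"
    and tEE :: "'e \<Rightarrow> 'e \<Rightarrow> 't::ab_group_add" and lT :: "'a \<Rightarrow> 't \<Rightarrow> 't" and rT :: "'t \<Rightarrow> 'a \<Rightarrow> 't"
    and tES :: "'e \<Rightarrow> 't \<Rightarrow> 's::ab_group_add"
    and Fs :: "'t set"
    and g :: "'t \<Rightarrow> 'a"
  assumes alg: "complex_algebra \<iota>"
    and bimod_E: "bimodule \<iota> lE rE"
    and bimod_F: "bimodule \<iota> lF rF"
    and fgp: "fg_projective_right rE"
    \<comment> \<open>d on degree 0 and 1, complex linear, Leibniz rules, d^2 = 0\<close>
    and d0_add: "addhom d0"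
    and d0_C: "\<forall>c a. d0 (\<iota> c * a) = lE (\<iota> c) (d0 a)"
    and d0_leib: "\<forall>a b. d0 (a * b) = rE (d0 a) b + lE a (d0 b)"
    and d1_add: "addhom d1"
    and d1_C: "\<forall>c \<omega>. d1 (lE (\<iota> c) \<omega>) = lF (\<iota> c) (d1 \<omega>)"
    and d1_leib_l: "\<forall>a \<omega>. d1 (lE a \<omega>) = wedge (d0 a) \<omega> + lF a (d1 \<omega>)"
    and d1_leib_r: "\<forall>\<omega> a. d1 (rE \<omega> a) = rF (d1 \<omega>) a - wedge \<omega> (d0 a)"
    and dd: "\<forall>a. d1 (d0 a) = 0"
    \<comment> \<open>the product Omega^1 x Omega^1 -> Omega^2 is an A-bimodule product\<close>
    and wedge_addl: "\<forall>x x' y. wedge (x + x') y = wedge x y + wedge x' y"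
    and wedge_addr: "\<forall>x y y'. wedge x (y + y') = wedge x y + wedge x y'"
    and wedge_l: "\<forall>a x y. wedge (lE a x) y = lF a (wedge x y)"
    and wedge_m: "\<forall>x a y. wedge (rE x a) y = wedge x (lE a y)"
    and wedge_r: "\<forall>x y a. wedge x (rE y a) = rF (wedge x y) a"
    \<comment> \<open>Omega^1, Omega^2 are right spans of da and da0 \<and> da1\<close>
    and gen1: "\<forall>\<omega>. \<exists>xs :: ('a \<times> 'a) list. \<omega> = sum_list (map (\<lambda>(a, b). rE (d0 a) b) xs)"
    and gen2: "\<forall>\<theta>. \<exists>xs :: ('a \<times> 'a \<times> 'a) list.
                  \<theta> = sum_list (map (\<lambda>(a, b, c). rF (wedge (d0 a) (d0 b)) c) xs)"
    \<comment> \<open>E \<otimes>_A E and E \<otimes>_A (E \<otimes>_A E)\<close>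
    and tens_EE: "is_tensor UNIV UNIV UNIV rE lE tEE"
    and bimod_T: "bimodule \<iota> lT rT"
    and lT_def: "\<forall>a x y. lT a (tEE x y) = tEE (lE a x) y"
    and rT_def: "\<forall>x y a. rT (tEE x y) a = tEE x (rE y a)"
    and tens_ES: "is_tensor UNIV UNIV UNIV rE lT tES"
    \<comment> \<open>(1): E = Z(E) \<otimes>_Z(A) A via the multiplication map\<close>
    and cond1: "is_tensor (bcenter lE rE) UNIV acenter rE (*) rE"
    \<comment> \<open>(2): E \<otimes>_A E = ker(wedge) \<oplus> F, F a right submodule, wedge restricted to F bijective\<close>
    and F_zero: "0 \<in> Fs"
    and F_add: "\<forall>x\<in>Fs. \<forall>y\<in>Fs. x + y \<in> Fs"
    and F_uminus: "\<forall>x\<in>Fs. - x \<in> Fs"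
    and F_right: "\<forall>x\<in>Fs. \<forall>a. rT x a \<in> Fs"
    and F_span: "\<forall>\<tau>. \<exists>k f. wedgeT tEE wedge k = 0 \<and> f \<in> Fs \<and> \<tau> = k + f"
    and F_inter: "\<forall>\<tau>\<in>Fs. wedgeT tEE wedge \<tau> = 0 \<longrightarrow> \<tau> = 0"
    and Q_iso: "bij_betw (wedgeT tEE wedge) Fs UNIV"
    \<comment> \<open>(3): sigma flips central elements\<close>
    and cond3: "\<forall>\<omega>\<in>bcenter lE rE. \<forall>\<eta>\<in>bcenter lE rE. sigma tEE wedge Fs (tEE \<omega> \<eta>) = tEE \<eta> \<omega>"
    \<comment> \<open>g is a pseudo-Riemannian bilinear metric\<close>
    and g_add: "addhom g"
    and g_l: "\<forall>a \<tau>. g (lT a \<tau>) = a * g \<tau>"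
    and g_r: "\<forall>\<tau> a. g (rT \<tau> a) = g \<tau> * a"
    and g_sym: "\<forall>\<tau>. g (sigma tEE wedge Fs \<tau>) = g \<tau>"
    and g_nondeg: "bij_betw (\<lambda>e x. g (tEE e x)) UNIV (right_dual rE)"
  shows "\<exists>!nabla. is_connection \<iota> rE rT d0 tEE nabla \<and> torsionless tEE wedge d1 nabla \<and>
           compatible_Z lE rE d0 tEE tES (sigma tEE wedge Fs) g nabla"
proof -
  interpret LC \<iota> lE rE lF rF d0 d1 wedge tEE lT rT tES Fs g
    by (intro LC.intro; rule assms)
  obtain J :: "(nat \<times> ('e \<times> 'a)) set" and \<xi> \<psi> where fr:
    "finite J" "\<forall>j\<in>J. \<xi> j \<in> bcenter lE rE" "\<forall>j\<in>J. \<forall>x y. \<psi> j (x + y) = \<psi> j x + \<psi> j y"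
    "\<forall>j\<in>J. \<forall>x a. \<psi> j (rE x a) = \<psi> j x * a" "\<forall>x. x = (\<Sum>j\<in>J. rE (\<xi> j) (\<psi> j x))"
    using frame_exists by blast
  have "\<forall>j\<in>J. \<exists>e. \<forall>x. g (tEE e x) = \<psi> j x"
  proof
    fix j assume "j \<in> J"
    then show "\<exists>e. \<forall>x. g (tEE e x) = \<psi> j x" by (intro dual_exists) (use fr in auto)
  qed
  then obtain \<xi>' where d: "\<forall>j\<in>J. \<forall>x. g (tEE (\<xi>' j) x) = \<psi> j x" by metis
  interpret LCF \<iota> lE rE lF rF d0 d1 wedge tEE lT rT tES Fs g J \<xi> \<xi>' \<psi>
    by (unfold_locales) (use fr d in auto)
  show ?thesis by (rule main)
qed

end
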